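(* If two circuits $c,d:a\to b$ are both safe and are equal modulo $E$, then they are equal modulo $A$.
   Context: A circuit is a morphism of the free symmetric strict monoidal category whose objects are natural numbers (tensor = addition) generated by $\mathsf{discard}:1\to 0$, $\mathsf{copy}:1\to 2$, $\mathsf{zero}:0\to1$, $\mathsf{add}:2\to1$, $\mathsf{one}:0\to 1$, $\mathsf{and}:2\to 1$, considered up to the laws of symmetric monoidal categories. Composition is diagrammatic ($f;g$ = first $f$ then $g$), $\sigma$ is the symmetry $2\to2$, $\mathsf{copy}_n$, $\mathsf{discard}_n$ are the evident composites. $A$ is the set of equations: $\mathsf{copy};\sigma=\mathsf{copy}$; $\mathsf{copy};(\mathsf{copy}\otimes \mathrm{id}_1)=\mathsf{copy};(\mathrm{id}_1\otimes\mathsf{copy})$; $\mathsf{copy};(\mathsf{discard}\otimes\mathrm{id}_1)=\mathrm{id}_1$; for every circuit $f:a\to b$, $f;\mathsf{copy}_b=\mathsf{copy}_a;(f\otimes f)$ and $f;\mathsf{discard}_b=\mathsf{discard}_a$; commutativity, associativity and unit laws for $(\mathsf{add},\mathsf{zero})$ and for $(\mathsf{and},\mathsf{one})$; $\mathsf{copy};\mathsf{add}=\mathsf{discard};\mathsf{zero}$; and distributivity $(\mathrm{id}_1\otimes\mathsf{add});\mathsf{and}=(\mathsf{copy}\otimes\mathrm{id}_2);(\mathrm{id}_1\otimes\sigma\otimes\mathrm{id}_1);(\mathsf{and}\otimes\mathsf{and});\mathsf{add}$. $E$ is $A$ together with the idempotence equation $\mathsf{copy};\mathsf{and}=\mathrm{id}_1$.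 "Equal modulo $A$" (resp. $E$) means related by the smallest congruence (w.r.t. composition and tensor) containing $A$ (resp. $E$). View a circuit as a directed graph whose nodes are wires and whose edges go from each input wire of a generator occurrence to each of its output wires. A circuit $c$ is safe if for every occurrence of $\mathsf{and}$ in $c$, there is no input port of $c$ from which both input ports of that $\mathsf{and}$ are reachable by a forward path. *)

theory Defs
  imports Main
begin

datatype gen = Discard | Copy | Zero | Add | One | And

datatype circ = Gen gen | Id nat | Sym nat nat | Seq circ circ | Par circ circ

fun gdom :: "gen \<Rightarrow> nat" where
  "gdom Discard = 1" | "gdom Copy = 1" | "gdom Zero = 0"
| "gdom Add = 2" | "gdom One = 0" | "gdom And = 2"

fun gcod :: "gen \<Rightarrow> nat" where
  "gcod Discard = 0" | "gcod Copy = 2" | "gcod Zero = 1"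
| "gcod Add = 1" | "gcod One = 1" | "gcod And = 1"

fun dm :: "circ \<Rightarrow> nat" where
  "dm (Gen g) = gdom g" | "dm (Id n) = n" | "dm (Sym m n) = m + n"
| "dm (Seq f g) = dm f" | "dm (Par f g) = dm f + dm g"

fun cd :: "circ \<Rightarrow> nat" where
  "cd (Gen g) = gcod g" | "cd (Id n) = n" | "cd (Sym m n) = n + m"
| "cd (Seq f g) = cd g" | "cd (Par f g) = cd f + cd g"

fun wt :: "circ \<Rightarrow> bool" where
  "wt (Gen g) = True" | "wt (Id n) = True" | "wt (Sym m n) = True"
| "wt (Seq f g) = (wt f \<and> wt g \<and> cd f = dm g)"
| "wt (Par f g) = (wt f \<and> wt g)"

definition hasty :: "circ \<Rightarrow> nat \<Rightarrow> nat \<Rightarrow> bool" where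
  "hasty c a b \<longleftrightarrow> wt c \<and> dm c = a \<and> cd c = b"

text \<open>Evident composites: copy_n : n -> 2n (outputs x1..xn x1..xn), discard_n : n -> 0.\<close>
fun copyn :: "nat \<Rightarrow> circ" where
  "copyn 0 = Id 0"
| "copyn (Suc n) = Seq (Par (Gen Copy) (copyn n)) (Par (Id 1) (Par (Sym 1 n) (Id n)))"

fun discardn :: "nat \<Rightarrow> circ" where
  "discardn 0 = Id 0"
| "discardn (Suc n) = Par (Gen Discard) (discardn n)"

abbreviation copy where "copy \<equiv> Gen Copy"
abbreviation discard where "discard \<equiv> Gen Discard"
abbreviation zero where "zero \<equiv> Gen Zero"
abbreviation one where "one \<equiv> Gen One"
abbreviation add where "add \<equiv> Gen Add"
abbreviation andg where "andg \<equiv> Gen And"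
abbreviation sigma where "sigma \<equiv> Sym 1 1"

inductive smc_law :: "circ \<Rightarrow> circ \<Rightarrow> bool" where
  seq_assoc: "smc_law (Seq (Seq f g) h) (Seq f (Seq g h))"
| seq_idl: "smc_law (Seq (Id (dm f)) f) f"
| seq_idr: "smc_law (Seq f (Id (cd f))) f"
| par_assoc: "smc_law (Par (Par f g) h) (Par f (Par g h))"
| par_unitl: "smc_law (Par (Id 0) f) f"
| par_unitr: "smc_law (Par f (Id 0)) f"
| par_id: "smc_law (Par (Id m) (Id n)) (Id (m + n))"
| interchange: "smc_law (Par (Seq f g) (Seq h k)) (Seq (Par f h) (Par g k))"
| sym_nat: "smc_law (Seq (Par f g) (Sym (cd f) (cd g))) (Seq (Sym (dm f) (dm g)) (Par g f))"
| sym_inv: "smc_law (Seq (Sym m n) (Sym n m)) (Id (m + n))"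
| sym_hex1: "smc_law (Sym (m + n) p) (Seq (Par (Id m) (Sym n p)) (Par (Sym m p) (Id n)))"
| sym_hex2: "smc_law (Sym m (n + p)) (Seq (Par (Sym m n) (Id p)) (Par (Id n) (Sym m p)))"
| sym_unitl: "smc_law (Sym 0 m) (Id m)"
| sym_unitr: "smc_law (Sym m 0) (Id m)"

inductive eqv :: "(circ \<Rightarrow> circ \<Rightarrow> bool) \<Rightarrow> circ \<Rightarrow> circ \<Rightarrow> bool" for ax where
  ax: "ax c d \<Longrightarrow> hasty c a b \<Longrightarrow> hasty d a b \<Longrightarrow> eqv ax c d"
| smc: "smc_law c d \<Longrightarrow> hasty c a b \<Longrightarrow> hasty d a b \<Longrightarrow> eqv ax c d"
| refl: "wt c \<Longrightarrow> eqv ax c c"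
| sym: "eqv ax c d \<Longrightarrow> eqv ax d c"
| trans: "eqv ax c d \<Longrightarrow> eqv ax d e \<Longrightarrow> eqv ax c e"
| seq: "eqv ax f f' \<Longrightarrow> eqv ax g g' \<Longrightarrow> cd f = dm g \<Longrightarrow> eqv ax (Seq f g) (Seq f' g')"
| par: "eqv ax f f' \<Longrightarrow> eqv ax g g' \<Longrightarrow> eqv ax (Par f g) (Par f' g')"

inductive axA :: "circ \<Rightarrow> circ \<Rightarrow> bool" where
  copy_comm: "axA (Seq copy sigma) copy"
| copy_assoc: "axA (Seq copy (Par copy (Id 1))) (Seq copy (Par (Id 1) copy))"
| copy_unit: "axA (Seq copy (Par discard (Id 1))) (Id 1)"
| copy_nat: "axA (Seq f (copyn (cd f))) (Seq (copyn (dm f)) (Par f f))"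
| discard_nat: "axA (Seq f (discardn (cd f))) (discardn (dm f))"
| add_comm: "axA (Seq sigma add) add"
| add_assoc: "axA (Seq (Par add (Id 1)) add) (Seq (Par (Id 1) add) add)"
| add_unitl: "axA (Seq (Par zero (Id 1)) add) (Id 1)"
| add_unitr: "axA (Seq (Par (Id 1) zero) add) (Id 1)"
| and_comm: "axA (Seq sigma andg) andg"
| and_assoc: "axA (Seq (Par andg (Id 1)) andg) (Seq (Par (Id 1) andg) andg)"
| and_unitl: "axA (Seq (Par one (Id 1)) andg) (Id 1)"
| and_unitr: "axA (Seq (Par (Id 1) one) andg) (Id 1)"
| copy_add: "axA (Seq copy add) (Seq discard zero)"
| distr: "axA (Seq (Par (Id 1) add) andg)
     (Seq (Seq (Seq (Par copy (Id 2)) (Par (Id 1) (Par sigma (Id 1)))) (Par andg andg)) add)"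

inductive axE :: "circ \<Rightarrow> circ \<Rightarrow> bool" where
  fromA: "axA c d \<Longrightarrow> axE c d"
| idem: "axE (Seq copy andg) (Id 1)"

definition eqA :: "circ \<Rightarrow> circ \<Rightarrow> bool" where "eqA = eqv axA"
definition eqE :: "circ \<Rightarrow> circ \<Rightarrow> bool" where "eqE = eqv axE"

text \<open>flow c S: given for each input wire of c the set of (global) input ports reaching it,
  returns whether every and-occurrence in c has disjoint reaching sets on its two inputs,
  together with the reaching sets of the output wires of c.\<close>
fun gflow :: "gen \<Rightarrow> nat set list \<Rightarrow> bool \<times> nat set list" where
  "gflow Discard xs = (True, [])"
| "gflow Copy xs = (True, [xs ! 0, xs ! 0])"
| "gflow Zero xs = (True, [{}])"
| "gflow One xs = (True, [{}])"
| "gflow Add xs = (True, [xs ! 0 \<union> xs ! 1])"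
| "gflow And xs = (xs ! 0 \<inter> xs ! 1 = {}, [xs ! 0 \<union> xs ! 1])"

fun flow :: "circ \<Rightarrow> nat set list \<Rightarrow> bool \<times> nat set list" where
  "flow (Gen g) xs = gflow g xs"
| "flow (Id n) xs = (True, xs)"
| "flow (Sym m n) xs = (True, drop m xs @ take m xs)"
| "flow (Seq f g) xs = (let (o1, ys) = flow f xs; (o2, zs) = flow g ys in (o1 \<and> o2, zs))"
| "flow (Par f g) xs = (let (o1, ys) = flow f (take (dm f) xs); (o2, zs) = flow g (drop (dm f) xs)
     in (o1 \<and> o2, ys @ zs))"

definition safe :: "circ \<Rightarrow> bool" where
  "safe c \<longleftrightarrow> fst (flow c (map (\<lambda>i. {i}) [0..<dm c]))"

end

theory Submission
  imports Defs "HOL-Library.Z2"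
begin
lemma eqv_typed: "eqv ax c d \<Longrightarrow> wt c \<and> wt d \<and> dm c = dm d \<and> cd c = cd d"
  by (induction rule: eqv.induct) (auto simp: hasty_def)

abbreviation eA (infix "\<approx>" 50) where "c \<approx> d \<equiv> eqv axA c d"

lemmas eA_trans[trans] = eqv.trans[of axA]

lemma wt_copyn[simp]: "wt (copyn n)" and dm_copyn[simp]: "dm (copyn n) = n" and cd_copyn[simp]: "cd (copyn n) = 2*n"
  by (induction n) auto
lemma wt_discardn[simp]: "wt (discardn n)" and dm_discardn[simp]: "dm (discardn n) = n" and cd_discardn[simp]: "cd (discardn n) = 0"
  by (induction n) auto

lemma smc_eq: "smc_law c d \<Longrightarrow> wt c \<Longrightarrow> wt d \<Longrightarrow> dm c = dm d \<Longrightarrow> cd c = cd d \<Longrightarrow> eqv ax c d"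
  by (rule eqv.smc[where a="dm c" and b="cd c"]) (auto simp: hasty_def)
lemma ax_eq: "ax c d \<Longrightarrow> wt c \<Longrightarrow> wt d \<Longrightarrow> dm c = dm d \<Longrightarrow> cd c = cd d \<Longrightarrow> eqv ax c d"
  by (rule eqv.ax[where a="dm c" and b="cd c"]) (auto simp: hasty_def)

lemma eS: "c \<approx> d \<Longrightarrow> d \<approx> c" by (rule eqv.sym)
lemma eR: "wt c \<Longrightarrow> c \<approx> c" by (rule eqv.refl)

lemma seqL: "f \<approx> f' \<Longrightarrow> wt g \<Longrightarrow> cd f = dm g \<Longrightarrow> Seq f g \<approx> Seq f' g"
  by (rule eqv.seq) (auto intro: eqv.refl)
lemma seqR: "g \<approx> g' \<Longrightarrow> wt f \<Longrightarrow> cd f = dm g \<Longrightarrow> Seq f g \<approx> Seq f g'"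
  by (rule eqv.seq) (auto intro: eqv.refl)
lemma parL: "f \<approx> f' \<Longrightarrow> wt g \<Longrightarrow> Par f g \<approx> Par f' g"
  by (rule eqv.par) (auto intro: eqv.refl)
lemma parR: "g \<approx> g' \<Longrightarrow> wt f \<Longrightarrow> Par f g \<approx> Par f g'"
  by (rule eqv.par) (auto intro: eqv.refl)

lemma assoc: "wt f \<Longrightarrow> wt g \<Longrightarrow> wt h \<Longrightarrow> cd f = dm g \<Longrightarrow> cd g = dm h \<Longrightarrow> Seq (Seq f g) h \<approx> Seq f (Seq g h)"
  by (rule smc_eq[OF smc_law.seq_assoc]) auto
lemma idl: "wt f \<Longrightarrow> n = dm f \<Longrightarrow> Seq (Id n) f \<approx> f"
  using smc_eq[OF smc_law.seq_idl[of f]] by auto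
lemma idr: "wt f \<Longrightarrow> n = cd f \<Longrightarrow> Seq f (Id n) \<approx> f"
  using smc_eq[OF smc_law.seq_idr[of f]] by auto
lemma passoc: "wt f \<Longrightarrow> wt g \<Longrightarrow> wt h \<Longrightarrow> Par (Par f g) h \<approx> Par f (Par g h)"
  by (rule smc_eq[OF smc_law.par_assoc]) auto
lemma punitl: "wt f \<Longrightarrow> Par (Id 0) f \<approx> f"
  by (rule smc_eq[OF smc_law.par_unitl]) auto
lemma punitr: "wt f \<Longrightarrow> Par f (Id 0) \<approx> f"
  by (rule smc_eq[OF smc_law.par_unitr]) auto
lemma pid: "Par (Id m) (Id n) \<approx> Id (m + n)"
  by (rule smc_eq[OF smc_law.par_id]) auto
lemma pid1: "Par (Id 1) (Id n) \<approx> Id (Suc n)"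
  using pid[of 1 n] by simp
lemma inter: "wt f \<Longrightarrow> wt g \<Longrightarrow> wt h \<Longrightarrow> wt k \<Longrightarrow> cd f = dm g \<Longrightarrow> cd h = dm k \<Longrightarrow>
   Par (Seq f g) (Seq h k) \<approx> Seq (Par f h) (Par g k)"
  by (rule smc_eq[OF smc_law.interchange]) auto
lemma symnat: "wt f \<Longrightarrow> wt g \<Longrightarrow> Seq (Par f g) (Sym (cd f) (cd g)) \<approx> Seq (Sym (dm f) (dm g)) (Par g f)"
  by (rule smc_eq[OF smc_law.sym_nat]) auto
lemma symul: "Sym 0 m \<approx> Id m"
  by (rule smc_eq[OF smc_law.sym_unitl]) auto
lemma symur: "Sym m 0 \<approx> Id m"
  by (rule smc_eq[OF smc_law.sym_unitr]) auto

lemma axeq: "axA c d \<Longrightarrow> wt c \<Longrightarrow> wt d \<Longrightarrow> dm c = dm d \<Longrightarrow> cd c = cd d \<Longrightarrow> c \<approx> d"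
  by (rule ax_eq)

lemma copy_nat: "wt f \<Longrightarrow> Seq f (copyn (cd f)) \<approx> Seq (copyn (dm f)) (Par f f)"
  by (rule axeq[OF axA.copy_nat]) auto
lemma discard_nat: "wt f \<Longrightarrow> Seq f (discardn (cd f)) \<approx> discardn (dm f)"
  by (rule axeq[OF axA.discard_nat]) auto

lemma split_mid:
  assumes w: "wt x1" "wt x2" "wt A" "wt B" and d: "dm x2 = 1" "dm A = k" "dm B = k" "dm x1 = 1"
    and z: "cd x2 = 0 \<or> cd A = 0"
  shows "Seq (Par (Id 1) (Par (Sym 1 k) (Id k))) (Par (Par x1 A) (Par x2 B)) \<approx> Par (Par x1 x2) (Par A B)"
proof -
  have s1: "Seq (Sym 1 k) (Par A x2) \<approx> Par x2 A"
  proof -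
    have "Seq (Sym 1 k) (Par A x2) \<approx> Seq (Par x2 A) (Sym (cd x2) (cd A))"
      using symnat[of x2 A] w d by (simp add: eS)
    also have "\<dots> \<approx> Seq (Par x2 A) (Id (cd x2 + cd A))"
      using z w by (auto intro!: seqR symul symur)
    also have "\<dots> \<approx> Par x2 A" using w by (intro idr) auto
    finally show ?thesis .
  qed
  have "Seq (Par (Id 1) (Par (Sym 1 k) (Id k))) (Par (Par x1 A) (Par x2 B))
     \<approx> Seq (Par (Id 1) (Par (Sym 1 k) (Id k))) (Par x1 (Par A (Par x2 B)))"
    using w d by (intro seqR passoc) auto
  also have "\<dots> \<approx> Seq (Par (Id 1) (Par (Sym 1 k) (Id k))) (Par x1 (Par (Par A x2) B))"
    using w d by (intro seqR parR eS[OF passoc]) auto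
  also have "\<dots> \<approx> Par (Seq (Id 1) x1) (Seq (Par (Sym 1 k) (Id k)) (Par (Par A x2) B))"
    using w d by (intro eS[OF inter]) auto
  also have "\<dots> \<approx> Par x1 (Seq (Par (Sym 1 k) (Id k)) (Par (Par A x2) B))"
    using w d by (intro parL idl) auto
  also have "\<dots> \<approx> Par x1 (Par (Seq (Sym 1 k) (Par A x2)) (Seq (Id k) B))"
    using w d by (intro parR eS[OF inter]) auto
  also have "\<dots> \<approx> Par x1 (Par (Par x2 A) (Seq (Id k) B))"
    using w d s1 by (intro parR parL) auto
  also have "\<dots> \<approx> Par x1 (Par (Par x2 A) B)"
    using w d by (intro parR idl) auto
  also have "\<dots> \<approx> Par x1 (Par x2 (Par A B))"
    using w d by (intro parR passoc) auto
  also have "\<dots> \<approx> Par (Par x1 x2) (Par A B)"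
    using w d by (intro eS[OF passoc]) auto
  finally show ?thesis .
qed

lemma split:
  assumes w: "wt x1" "wt x2" "wt A" "wt B" and d: "dm x2 = 1" "dm A = k" "dm B = k" "dm x1 = 1"
    and z: "cd x2 = 0 \<or> cd A = 0"
  shows "Seq (copyn (Suc k)) (Par (Par x1 A) (Par x2 B)) \<approx> Par (Seq copy (Par x1 x2)) (Seq (copyn k) (Par A B))"
proof -
  have "Seq (copyn (Suc k)) (Par (Par x1 A) (Par x2 B))
     \<approx> Seq (Par copy (copyn k)) (Seq (Par (Id 1) (Par (Sym 1 k) (Id k))) (Par (Par x1 A) (Par x2 B)))"
    using w d by (simp, intro assoc) auto
  also have "\<dots> \<approx> Seq (Par copy (copyn k)) (Par (Par x1 x2) (Par A B))"
    using w d z by (intro seqR split_mid) auto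
  also have "\<dots> \<approx> Par (Seq copy (Par x1 x2)) (Seq (copyn k) (Par A B))"
    using w d by (intro eS[OF inter]) auto
  finally show ?thesis .
qed

lemma CU_L: "Seq copy (Par discard (Id 1)) \<approx> Id 1"
  by (rule axeq[OF axA.copy_unit]) auto

lemma CU_R: "Seq copy (Par (Id 1) discard) \<approx> Id 1"
proof -
  have "Seq copy (Par (Id 1) discard) \<approx> Seq (Seq copy sigma) (Par (Id 1) discard)"
    by (intro seqL eS[OF axeq[OF axA.copy_comm]]) auto
  also have "\<dots> \<approx> Seq copy (Seq sigma (Par (Id 1) discard))"
    by (intro assoc) auto
  also have "\<dots> \<approx> Seq copy (Seq (Par discard (Id 1)) (Sym 0 1))"
    using symnat[of discard "Id 1"] by (intro seqR) (auto simp: eS)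
  also have "\<dots> \<approx> Seq copy (Seq (Par discard (Id 1)) (Id 1))"
    by (intro seqR symul) auto
  also have "\<dots> \<approx> Seq copy (Par discard (Id 1))"
    by (intro seqR idr) auto
  also have "\<dots> \<approx> Id 1" by (rule CU_L)
  finally show ?thesis .
qed

lemma G1: "Seq (copyn k) (Par (discardn k) (Id k)) \<approx> Id k"
proof (induction k)
  case 0
  have "Seq (copyn 0) (Par (discardn 0) (Id 0)) \<approx> Par (Id 0) (Id 0)" by (simp, intro idl) auto
  also have "\<dots> \<approx> Id 0" by (intro punitl) auto
  finally show ?case .
next
  case (Suc k)
  have "Seq (copyn (Suc k)) (Par (discardn (Suc k)) (Id (Suc k)))
     \<approx> Seq (copyn (Suc k)) (Par (Par discard (discardn k)) (Par (Id 1) (Id k)))"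
    unfolding discardn.simps(2) by (intro seqR parR eS[OF pid1]) auto
  also have "\<dots> \<approx> Par (Seq copy (Par discard (Id 1))) (Seq (copyn k) (Par (discardn k) (Id k)))"
    by (intro split) auto
  also have "\<dots> \<approx> Par (Id 1) (Id k)"
    using Suc by (intro eqv.par CU_L)
  also have "\<dots> \<approx> Id (Suc k)" by (rule pid1)
  finally show ?case .
qed

definition piL :: "nat \<Rightarrow> nat \<Rightarrow> circ" where "piL a b = Par (Id a) (discardn b)"
definition piR :: "nat \<Rightarrow> nat \<Rightarrow> circ" where "piR a b = Par (discardn a) (Id b)"
definition pair :: "circ \<Rightarrow> circ \<Rightarrow> circ" where "pair F G = Seq (copyn (dm F)) (Par F G)"

lemma pi_simps[simp]: "wt (piL a b)" "dm (piL a b) = a + b" "cd (piL a b) = a"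
  "wt (piR a b)" "dm (piR a b) = a + b" "cd (piR a b) = b"
  by (auto simp: piL_def piR_def)
lemma pair_simps[simp]: "dm (pair F G) = dm F" "cd (pair F G) = cd F + cd G"
  "wt (pair F G) = (wt F \<and> wt G \<and> dm G = dm F)"
  by (auto simp: pair_def)

lemma Q: "pair (piL a b) (piR a b) \<approx> Id (a + b)"
proof (induction a)
  case 0
  have "pair (piL 0 b) (piR 0 b) \<approx> Seq (copyn b) (Par (discardn b) (Id b))"
    unfolding pair_def piL_def piR_def by (simp, intro seqR eqv.par punitl) auto
  also have "\<dots> \<approx> Id b" by (rule G1)
  finally show ?case by simp
next
  case (Suc a)
  have "pair (piL (Suc a) b) (piR (Suc a) b) \<approx>
    Seq (copyn (Suc (a + b))) (Par (Par (Id 1) (piL a b)) (Par discard (piR a b)))"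
  proof -
    have "Par (Id (Suc a)) (discardn b) \<approx> Par (Par (Id 1) (Id a)) (discardn b)"
      by (intro parL eS[OF pid1]) auto
    also have "\<dots> \<approx> Par (Id 1) (piL a b)" unfolding piL_def by (intro passoc) auto
    finally have 1: "Par (Id (Suc a)) (discardn b) \<approx> Par (Id 1) (piL a b)" .
    have 2: "Par (discardn (Suc a)) (Id b) \<approx> Par discard (piR a b)"
      unfolding piR_def by (simp, intro passoc) auto
    have "Seq (copyn (Suc (a+b))) (Par (Par (Id (Suc a)) (discardn b)) (Par (discardn (Suc a)) (Id b))) \<approx> Seq (copyn (Suc (a+b))) (Par (Par (Id 1) (piL a b)) (Par discard (piR a b)))"
      by (rule seqR[OF eqv.par[OF 1 2]]) (auto simp: piL_def piR_def)
    then show ?thesis unfolding pair_def piL_def[of "Suc a" b] piR_def[of "Suc a" b] by simp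
  qed
  also have "\<dots> \<approx> Par (Seq copy (Par (Id 1) discard)) (pair (piL a b) (piR a b))"
    unfolding pair_def pi_simps(2) by (intro split) auto
  also have "\<dots> \<approx> Par (Id 1) (Id (a + b))"
    using Suc by (intro eqv.par CU_R)
  also have "\<dots> \<approx> Id (Suc a + b)" using pid1 by simp
  finally show ?case .
qed

lemma pair_cong: "F \<approx> F' \<Longrightarrow> G \<approx> G' \<Longrightarrow> dm G = dm F \<Longrightarrow> pair F G \<approx> pair F' G'"
  unfolding pair_def using eqv_typed[of axA F F'] eqv_typed[of axA G G']
  by (metis eqv.par seqR cd_copyn dm.simps(5) mult_2 wt_copyn)

lemma P1: "wt F \<Longrightarrow> wt G \<Longrightarrow> wt H \<Longrightarrow> wt K \<Longrightarrow> dm G = dm F \<Longrightarrow> cd F = dm H \<Longrightarrow> cd G = dm K \<Longrightarrow>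
  Seq (pair F G) (Par H K) \<approx> pair (Seq F H) (Seq G K)"
proof -
  assume a: "wt F" "wt G" "wt H" "wt K" "dm G = dm F" "cd F = dm H" "cd G = dm K"
  have "Seq (pair F G) (Par H K) \<approx> Seq (copyn (dm F)) (Seq (Par F G) (Par H K))"
    unfolding pair_def using a by (intro assoc) auto
  also have "\<dots> \<approx> pair (Seq F H) (Seq G K)"
    unfolding pair_def using a by (simp, intro seqR eS[OF inter]) auto
  finally show ?thesis .
qed

lemma P2: "wt f \<Longrightarrow> wt F \<Longrightarrow> wt G \<Longrightarrow> dm F = cd f \<Longrightarrow> dm G = cd f \<Longrightarrow>
  Seq f (pair F G) \<approx> pair (Seq f F) (Seq f G)"
proof -
  assume a: "wt f" "wt F" "wt G" "dm F = cd f" "dm G = cd f"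
  have "Seq f (pair F G) \<approx> Seq (Seq f (copyn (cd f))) (Par F G)"
    unfolding pair_def a(4) using a by (intro eS[OF assoc]) auto
  also have "\<dots> \<approx> Seq (Seq (copyn (dm f)) (Par f f)) (Par F G)"
    using a by (intro seqL copy_nat) auto
  also have "\<dots> \<approx> Seq (copyn (dm f)) (Seq (Par f f) (Par F G))"
    using a by (intro assoc) auto
  also have "\<dots> \<approx> Seq (copyn (dm f)) (Par (Seq f F) (Seq f G))"
    using a by (intro seqR eS[OF inter]) auto
  finally show ?thesis unfolding pair_def by simp
qed

lemma G1L: "pair (discardn k) (Id k) \<approx> Id k"
  unfolding pair_def using G1 by simp

lemma G1R: "pair (Id k) (discardn k) \<approx> Id k"
proof -
  have "pair (Id k) (discardn k) \<approx> pair (piL k 0) (piR k 0)"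
    unfolding piL_def piR_def discardn.simps(1) by (intro pair_cong eS[OF punitr]) auto
  also have "\<dots> \<approx> Id k" using Q[of k 0] by simp
  finally show ?thesis .
qed

lemma P3L: "wt G \<Longrightarrow> dm G = k \<Longrightarrow> pair (discardn k) G \<approx> G"
proof -
  assume a: "wt G" "dm G = k"
  have "pair (discardn k) G \<approx> pair (Seq (discardn k) (Id 0)) (Seq (Id k) G)"
    using a by (intro pair_cong eS[OF idr] eS[OF idl]) auto
  also have "\<dots> \<approx> Seq (pair (discardn k) (Id k)) (Par (Id 0) G)"
    using a by (intro eS[OF P1]) auto
  also have "\<dots> \<approx> Seq (Id k) (Par (Id 0) G)"
    using a by (intro seqL G1L) auto
  also have "\<dots> \<approx> Par (Id 0) G" using a by (intro idl) auto
  also have "\<dots> \<approx> G" using a by (intro punitl)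
  finally show ?thesis .
qed

lemma P3R: "wt F \<Longrightarrow> dm F = k \<Longrightarrow> pair F (discardn k) \<approx> F"
proof -
  assume a: "wt F" "dm F = k"
  have "pair F (discardn k) \<approx> pair (Seq (Id k) F) (Seq (discardn k) (Id 0))"
    using a by (intro pair_cong eS[OF idr] eS[OF idl]) auto
  also have "\<dots> \<approx> Seq (pair (Id k) (discardn k)) (Par F (Id 0))"
    using a by (intro eS[OF P1]) auto
  also have "\<dots> \<approx> Seq (Id k) (Par F (Id 0))"
    using a by (intro seqL G1R) auto
  also have "\<dots> \<approx> Par F (Id 0)" using a by (intro idl) auto
  also have "\<dots> \<approx> F" using a by (intro punitr)
  finally show ?thesis .
qed

lemma eta: "wt X \<Longrightarrow> cd X = a + b \<Longrightarrow> X \<approx> pair (Seq X (piL a b)) (Seq X (piR a b))"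
proof -
  assume x: "wt X" "cd X = a + b"
  have "X \<approx> Seq X (Id (a + b))" using x by (intro eS[OF idr]) auto
  also have "\<dots> \<approx> Seq X (pair (piL a b) (piR a b))" using x by (intro seqR eS[OF Q]) auto
  also have "\<dots> \<approx> pair (Seq X (piL a b)) (Seq X (piR a b))" using x by (intro P2) auto
  finally show ?thesis .
qed

lemma dadd: "discardn (m + n) \<approx> Par (discardn m) (discardn n)"
proof (induction m)
  case 0 show ?case by (simp, intro eS[OF punitl]) auto
next
  case (Suc m)
  have "discardn (Suc m + n) \<approx> Par discard (Par (discardn m) (discardn n))"
    using Suc by (simp, intro parR) auto
  also have "\<dots> \<approx> Par (discardn (Suc m)) (discardn n)" by (simp, intro eS[OF passoc]) auto
  finally show ?case .
qed

lemma discard1: "wt S \<Longrightarrow> cd S = 1 \<Longrightarrow> Seq S discard \<approx> discardn (dm S)"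
proof -
  assume a: "wt S" "cd S = 1"
  have "Seq S discard \<approx> Seq S (discardn (cd S))" using a by (simp, intro seqR eS[OF punitr]) auto
  also have "\<dots> \<approx> discardn (dm S)" using a by (intro discard_nat)
  finally show ?thesis .
qed

lemma pair_assoc: "wt F \<Longrightarrow> wt G \<Longrightarrow> wt H \<Longrightarrow> dm G = dm F \<Longrightarrow> dm H = dm F \<Longrightarrow>
  pair (pair F G) H \<approx> pair F (pair G H)"
proof -
  assume w: "wt F" "wt G" "wt H" "dm G = dm F" "dm H = dm F"
  define X where "X = pair (pair F G) H"
  define a where "a = cd F"
  define g where "g = cd G"
  define h where "h = cd H"
  define k where "k = dm F"
  have dH: "Seq H (discardn h) \<approx> discardn k" using discard_nat[of H] w by (simp add: h_def k_def)
  have dG: "Seq G (discardn g) \<approx> discardn k" using discard_nat[of G] w by (simp add: g_def k_def)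
  have dF: "Seq F (discardn a) \<approx> discardn k" using discard_nat[of F] w by (simp add: a_def k_def)
  have wX: "wt X" "cd X = a + (g + h)" "dm X = k" using w by (auto simp: X_def a_def g_def h_def k_def)
  have "X \<approx> pair (Seq X (piL a (g+h))) (Seq X (piR a (g+h)))" using wX by (intro eta) auto
  also have "\<dots> \<approx> pair F (pair G H)"
  proof (rule pair_cong)
    have "Seq X (piL a (g+h)) \<approx> Seq X (Par (Par (Id a) (discardn g)) (discardn h))"
    proof -
      have "piL a (g+h) \<approx> Par (Id a) (Par (discardn g) (discardn h))"
        unfolding piL_def by (intro parR dadd) auto
      also have "\<dots> \<approx> Par (Par (Id a) (discardn g)) (discardn h)" by (intro eS[OF passoc]) auto
      finally show ?thesis using wX by (intro seqR) auto
    qed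
    also have "\<dots> \<approx> pair (Seq (pair F G) (Par (Id a) (discardn g))) (Seq H (discardn h))"
      unfolding X_def using w by (intro P1) (auto simp: a_def g_def h_def)
    also have "\<dots> \<approx> pair (pair (Seq F (Id a)) (Seq G (discardn g))) (discardn k)"
      using w dH by (intro pair_cong P1) (auto simp: a_def g_def h_def k_def)
    also have "\<dots> \<approx> pair (Seq F (Id a)) (Seq G (discardn g))"
      using w by (intro P3R) (auto simp: a_def g_def h_def k_def)
    also have "\<dots> \<approx> pair F (discardn k)"
      using w dG by (intro pair_cong idr) (auto simp: a_def g_def h_def k_def)
    also have "\<dots> \<approx> F" using w by (intro P3R) (auto simp: k_def)
    finally show "Seq X (piL a (g+h)) \<approx> F" .
    have "Seq X (piR a (g+h)) \<approx> Seq X (Par (Par (discardn a) (Id g)) (Id h))"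
    proof -
      have "piR a (g+h) \<approx> Par (discardn a) (Par (Id g) (Id h))"
        unfolding piR_def by (intro parR eS[OF pid]) auto
      also have "\<dots> \<approx> Par (Par (discardn a) (Id g)) (Id h)" by (intro eS[OF passoc]) auto
      finally show ?thesis using wX by (intro seqR) auto
    qed
    also have "\<dots> \<approx> pair (Seq (pair F G) (Par (discardn a) (Id g))) (Seq H (Id h))"
      unfolding X_def using w by (intro P1) (auto simp: a_def g_def h_def)
    also have "\<dots> \<approx> pair (pair (Seq F (discardn a)) (Seq G (Id g))) H"
      using w by (intro pair_cong P1 idr) (auto simp: a_def g_def h_def k_def)
    also have "\<dots> \<approx> pair (pair (discardn k) G) H"
      using w dF by (intro pair_cong idr eR) (auto simp: a_def g_def h_def k_def)
    also have "\<dots> \<approx> pair G H"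
      using w by (intro pair_cong P3L eR) (auto simp: k_def)
    finally show "Seq X (piR a (g+h)) \<approx> pair G H" .
    show "dm (Seq X (piR a (g + h))) = dm (Seq X (piL a (g + h)))" by simp
  qed
  finally show ?thesis unfolding X_def .
qed

lemma sym_pair: "Sym m n \<approx> pair (piR m n) (piL m n)"
proof -
  have "Sym m n \<approx> Seq (Sym m n) (Id (n + m))" by (intro eS[OF idr]) auto
  also have "\<dots> \<approx> Seq (Sym m n) (pair (piL n m) (piR n m))" by (intro seqR eS[OF Q]) auto
  also have "\<dots> \<approx> pair (Seq (Sym m n) (piL n m)) (Seq (Sym m n) (piR n m))" by (intro P2) auto
  also have "\<dots> \<approx> pair (piR m n) (piL m n)"
  proof (rule pair_cong)
    have "Seq (Sym m n) (piL n m) \<approx> Seq (piR m n) (Sym 0 n)"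
      using symnat[of "discardn m" "Id n"] unfolding piL_def piR_def by (simp add: eS)
    also have "\<dots> \<approx> Seq (piR m n) (Id n)" by (intro seqR symul) auto
    also have "\<dots> \<approx> piR m n" by (intro idr) auto
    finally show "Seq (Sym m n) (piL n m) \<approx> piR m n" .
    have "Seq (Sym m n) (piR n m) \<approx> Seq (piL m n) (Sym m 0)"
      using symnat[of "Id m" "discardn n"] unfolding piL_def piR_def by (simp add: eS)
    also have "\<dots> \<approx> Seq (piL m n) (Id m)" by (intro seqR symur) auto
    also have "\<dots> \<approx> piL m n" by (intro idr) auto
    finally show "Seq (Sym m n) (piR n m) \<approx> piL m n" .
  qed simp
  finally show ?thesis .
qed

lemma copyn1: "copyn 1 \<approx> copy"
proof -
  have "copyn 1 = Seq (Par copy (Id 0)) (Par (Id 1) (Par (Sym 1 0) (Id 0)))" by simp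
  also have "\<dots> \<approx> Seq copy (Par (Id 1) (Par (Sym 1 0) (Id 0)))" by (intro seqL punitr) auto
  also have "\<dots> \<approx> Seq copy (Par (Id 1) (Sym 1 0))" by (intro seqR parR punitr) auto
  also have "\<dots> \<approx> Seq copy (Par (Id 1) (Id 1))" by (intro seqR parR symur) auto
  also have "\<dots> \<approx> Seq copy (Id 2)"
  proof -
    have p: "Par (Id 1) (Id 1) \<approx> Id 2" using pid[of 1 1] by (simp only: one_add_one)
    show ?thesis by (intro seqR p) auto
  qed
  also have "\<dots> \<approx> copy" by (intro idr) auto
  finally show ?thesis .
qed

lemma PDL: "wt X \<Longrightarrow> dm X = k \<Longrightarrow> Par (discardn m) X \<approx> Seq (piR m k) X"
proof -
  assume a: "wt X" "dm X = k"
  have "Par (discardn m) X \<approx> Par (Seq (discardn m) (Id 0)) (Seq (Id k) X)"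
    using a by (intro eqv.par eS[OF idr] eS[OF idl]) auto
  also have "\<dots> \<approx> Seq (piR m k) (Par (Id 0) X)" unfolding piR_def using a by (intro inter) auto
  also have "\<dots> \<approx> Seq (piR m k) X" using a by (intro seqR punitl) auto
  finally show ?thesis .
qed

lemma PDR: "wt X \<Longrightarrow> dm X = k \<Longrightarrow> Par X (discardn m) \<approx> Seq (piL k m) X"
proof -
  assume a: "wt X" "dm X = k"
  have "Par X (discardn m) \<approx> Par (Seq (Id k) X) (Seq (discardn m) (Id 0))"
    using a by (intro eqv.par eS[OF idr] eS[OF idl]) auto
  also have "\<dots> \<approx> Seq (piL k m) (Par X (Id 0))" unfolding piL_def using a by (intro inter) auto
  also have "\<dots> \<approx> Seq (piL k m) X" using a by (intro seqR punitr) auto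
  finally show ?thesis .
qed

datatype trm = V nat | Z | E1 | Ad trm trm | Mu trm trm

fun proj :: "nat \<Rightarrow> nat \<Rightarrow> circ" where
  "proj (Suc a) 0 = Par (Id 1) (discardn a)"
| "proj (Suc a) (Suc i) = Par discard (proj a i)"
| "proj 0 i = Seq (discardn 0) zero"

lemma proj_ty[simp]: "i < a \<Longrightarrow> wt (proj a i)" "i < a \<Longrightarrow> dm (proj a i) = a" "i < a \<Longrightarrow> cd (proj a i) = 1"
  by (induction a i rule: proj.induct) auto

fun tc :: "nat \<Rightarrow> trm \<Rightarrow> circ" where
  "tc a (V i) = (if i < a then proj a i else Seq (discardn a) zero)"
| "tc a Z = Seq (discardn a) zero"
| "tc a E1 = Seq (discardn a) one"
| "tc a (Ad s t) = Seq (pair (tc a s) (tc a t)) add"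
| "tc a (Mu s t) = Seq (pair (tc a s) (tc a t)) andg"

lemma tc_ty[simp]: "wt (tc a t)" "dm (tc a t) = a" "cd (tc a t) = 1"
  by (induction t) auto

fun tuple :: "nat \<Rightarrow> trm list \<Rightarrow> circ" where
  "tuple a [] = discardn a"
| "tuple a (t # ts) = pair (tc a t) (tuple a ts)"

lemma tuple_ty[simp]: "wt (tuple a ts)" "dm (tuple a ts) = a" "cd (tuple a ts) = length ts"
  by (induction ts) auto

fun subst :: "trm list \<Rightarrow> trm \<Rightarrow> trm" where
  "subst ss (V i) = (if i < length ss then ss ! i else Z)"
| "subst ss Z = Z"
| "subst ss E1 = E1"
| "subst ss (Ad s t) = Ad (subst ss s) (subst ss t)"
| "subst ss (Mu s t) = Mu (subst ss s) (subst ss t)"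

fun sh :: "nat \<Rightarrow> trm \<Rightarrow> trm" where
  "sh m (V i) = V (m + i)"
| "sh m Z = Z"
| "sh m E1 = E1"
| "sh m (Ad s t) = Ad (sh m s) (sh m t)"
| "sh m (Mu s t) = Mu (sh m s) (sh m t)"

fun vars :: "trm \<Rightarrow> nat set" where
  "vars (V i) = {i}"
| "vars Z = {}"
| "vars E1 = {}"
| "vars (Ad s t) = vars s \<union> vars t"
| "vars (Mu s t) = vars s \<union> vars t"

lemma BIN:
  assumes "wt X" "cd X = k" "wt g" "dm g = 2" "wt A" "wt B" "dm A = k" "dm B = k" "cd A = 1" "cd B = 1"
    "Seq X A \<approx> A'" "Seq X B \<approx> B'"
  shows "Seq X (Seq (pair A B) g) \<approx> Seq (pair A' B') g"
proof -
  have "Seq X (Seq (pair A B) g) \<approx> Seq (Seq X (pair A B)) g" using assms by (intro eS[OF assoc]) auto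
  also have "\<dots> \<approx> Seq (pair (Seq X A) (Seq X B)) g" using assms by (intro seqL P2) auto
  also have "\<dots> \<approx> Seq (pair A' B') g"
    using assms eqv_typed[OF assms(11)] eqv_typed[OF assms(12)] by (intro seqL pair_cong) auto
  finally show ?thesis .
qed

lemma ZER:
  assumes "wt X" "wt g" "dm g = 0" "cd X = k"
  shows "Seq X (Seq (discardn k) g) \<approx> Seq (discardn (dm X)) g"
proof -
  have "Seq X (Seq (discardn k) g) \<approx> Seq (Seq X (discardn k)) g" using assms by (intro eS[OF assoc]) auto
  also have "\<dots> \<approx> Seq (discardn (dm X)) g" using assms discard_nat[of X] by (intro seqL) auto
  finally show ?thesis .
qed

lemma K0: "i < length ss \<Longrightarrow> Seq (tuple k ss) (proj (length ss) i) \<approx> tc k (ss ! i)"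
proof (induction ss arbitrary: i)
  case Nil then show ?case by simp
next
  case (Cons s ss)
  show ?case
  proof (cases i)
    case 0
    have "Seq (tuple k (s # ss)) (proj (length (s # ss)) i)
       = Seq (pair (tc k s) (tuple k ss)) (Par (Id 1) (discardn (length ss)))" using 0 by simp
    also have "\<dots> \<approx> pair (Seq (tc k s) (Id 1)) (Seq (tuple k ss) (discardn (length ss)))"
      by (intro P1) auto
    also have "\<dots> \<approx> pair (tc k s) (discardn k)"
      using discard_nat[of "tuple k ss"] by (intro pair_cong idr) auto
    also have "\<dots> \<approx> tc k s" by (intro P3R) auto
    finally show ?thesis using 0 by simp
  next
    case (Suc j)
    have "Seq (tuple k (s # ss)) (proj (length (s # ss)) i)
       = Seq (pair (tc k s) (tuple k ss)) (Par discard (proj (length ss) j))" using Suc by simp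
    also have "\<dots> \<approx> pair (Seq (tc k s) discard) (Seq (tuple k ss) (proj (length ss) j))"
      using Cons.prems Suc by (intro P1) auto
    also have "\<dots> \<approx> pair (discardn k) (tc k (ss ! j))"
      using Cons Suc discard1[of "tc k s"] by (intro pair_cong) auto
    also have "\<dots> \<approx> tc k (ss ! j)" by (intro P3L) auto
    finally show ?thesis using Suc by simp
  qed
qed

lemma K: "Seq (tuple k ss) (tc (length ss) u) \<approx> tc k (subst ss u)"
proof (induction u)
  case (V i)
  show ?case
  proof (cases "i < length ss")
    case True then show ?thesis using K0[OF True] by simp
  next
    case False then show ?thesis using ZER[of "tuple k ss" zero "length ss"] by simp
  qed
next
  case Z then show ?case using ZER[of "tuple k ss" zero "length ss"] by simp
next
  case E1 then show ?case using ZER[of "tuple k ss" one "length ss"] by simp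
next
  case (Ad s t) then show ?case by (simp, intro BIN) auto
next
  case (Mu s t) then show ?case by (simp, intro BIN) auto
qed

lemma KT: "Seq (tuple k ss) (tuple (length ss) us) \<approx> tuple k (map (subst ss) us)"
proof (induction us)
  case Nil then show ?case using discard_nat[of "tuple k ss"] by simp
next
  case (Cons u us)
  have "Seq (tuple k ss) (tuple (length ss) (u # us))
     \<approx> pair (Seq (tuple k ss) (tc (length ss) u)) (Seq (tuple k ss) (tuple (length ss) us))"
    by (simp, intro P2) auto
  also have "\<dots> \<approx> tuple k (map (subst ss) (u # us))"
    using Cons K by (simp, intro pair_cong) auto
  finally show ?case .
qed

lemma tuple_app: "pair (tuple k ts) (tuple k us) \<approx> tuple k (ts @ us)"
proof (induction ts)
  case Nil then show ?case by (simp, intro P3L) auto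
next
  case (Cons t ts)
  have "pair (tuple k (t # ts)) (tuple k us) \<approx> pair (tc k t) (pair (tuple k ts) (tuple k us))"
    by (simp, intro pair_assoc) auto
  also have "\<dots> \<approx> tuple k ((t # ts) @ us)" using Cons by (simp, intro pair_cong eR) auto
  finally show ?case .
qed

lemma tc_tuple1: "tuple k [t] \<approx> tc k t" by (simp, intro P3R) auto

lemma DLV: "i < k \<Longrightarrow> Par (discardn m) (proj k i) \<approx> proj (m + k) (m + i)"
proof (induction m)
  case 0 then show ?case by (simp, intro punitl) auto
next
  case (Suc m)
  have "Par (discardn (Suc m)) (proj k i) \<approx> Par discard (Par (discardn m) (proj k i))"
    using Suc by (simp, intro passoc) auto
  also have "\<dots> \<approx> Par discard (proj (m + k) (m + i))" using Suc by (intro parR) auto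
  finally show ?case by simp
qed

lemma DLZ: "wt g \<Longrightarrow> dm g = 0 \<Longrightarrow> Par (discardn m) (Seq (discardn k) g) \<approx> Seq (discardn (m + k)) g"
proof -
  assume a: "wt g" "dm g = 0"
  have "Par (discardn m) (Seq (discardn k) g) \<approx> Par (Seq (discardn m) (Id 0)) (Seq (discardn k) g)"
    using a by (intro parL eS[OF idr]) auto
  also have "\<dots> \<approx> Seq (Par (discardn m) (discardn k)) (Par (Id 0) g)" using a by (intro inter) auto
  also have "\<dots> \<approx> Seq (discardn (m + k)) g" using a by (intro eqv.seq eS[OF dadd] punitl) auto
  finally show ?thesis .
qed

lemma DRV: "i < k \<Longrightarrow> Par (proj k i) (discardn m) \<approx> proj (k + m) i"
proof (induction k arbitrary: i)
  case 0 then show ?case by simp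
next
  case (Suc k)
  show ?case
  proof (cases i)
    case 0
    have "Par (proj (Suc k) i) (discardn m) \<approx> Par (Id 1) (Par (discardn k) (discardn m))"
      using 0 by (simp, intro passoc) auto
    also have "\<dots> \<approx> Par (Id 1) (discardn (k + m))" by (intro parR eS[OF dadd]) auto
    finally show ?thesis using 0 by simp
  next
    case (Suc j)
    have "Par (proj (Suc k) i) (discardn m) \<approx> Par discard (Par (proj k j) (discardn m))"
      using Suc \<open>i < Suc k\<close> by (simp, intro passoc) auto
    also have "\<dots> \<approx> Par discard (proj (k + m) j)" using Suc.IH \<open>i < Suc k\<close> Suc by (intro parR) auto
    finally show ?thesis using Suc by simp
  qed
qed

lemma DRZ: "wt g \<Longrightarrow> dm g = 0 \<Longrightarrow> Par (Seq (discardn k) g) (discardn m) \<approx> Seq (discardn (k + m)) g"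
proof -
  assume a: "wt g" "dm g = 0"
  have "Par (Seq (discardn k) g) (discardn m) \<approx> Par (Seq (discardn k) g) (Seq (discardn m) (Id 0))"
    using a by (intro parR eS[OF idr]) auto
  also have "\<dots> \<approx> Seq (Par (discardn k) (discardn m)) (Par g (Id 0))" using a by (intro inter) auto
  also have "\<dots> \<approx> Seq (discardn (k + m)) g" using a by (intro eqv.seq eS[OF dadd] punitr) auto
  finally show ?thesis .
qed

lemma DL: "Par (discardn m) (tc k t) \<approx> tc (m + k) (sh m t)"
proof (induction t)
  case (V i) then show ?case using DLV[of i k m] DLZ[of zero m k] by auto
next
  case Z then show ?case using DLZ[of zero m k] by simp
next
  case E1 then show ?case using DLZ[of one m k] by simp
next
  case (Ad s t)
  have "Par (discardn m) (tc k (Ad s t)) \<approx> Seq (piR m k) (tc k (Ad s t))" by (intro PDL) auto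
  also have "\<dots> \<approx> tc (m + k) (sh m (Ad s t))"
    using Ad eqv.trans[OF eS[OF PDL]] by (simp, intro BIN) auto
  finally show ?case .
next
  case (Mu s t)
  have "Par (discardn m) (tc k (Mu s t)) \<approx> Seq (piR m k) (tc k (Mu s t))" by (intro PDL) auto
  also have "\<dots> \<approx> tc (m + k) (sh m (Mu s t))"
    using Mu eqv.trans[OF eS[OF PDL]] by (simp, intro BIN) auto
  finally show ?case .
qed

lemma DR: "vars t \<subseteq> {..<k} \<Longrightarrow> Par (tc k t) (discardn m) \<approx> tc (k + m) t"
proof (induction t)
  case (V i) then show ?case using DRV[of i k m] by auto
next
  case Z then show ?case using DRZ[of zero k m] by simp
next
  case E1 then show ?case using DRZ[of one k m] by simp
next
  case (Ad s t)
  have "Par (tc k (Ad s t)) (discardn m) \<approx> Seq (piL k m) (tc k (Ad s t))" by (intro PDR) auto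
  also have "\<dots> \<approx> tc (k + m) (Ad s t)"
    using Ad eqv.trans[OF eS[OF PDR]] by (simp, intro BIN) auto
  finally show ?case .
next
  case (Mu s t)
  have "Par (tc k (Mu s t)) (discardn m) \<approx> Seq (piL k m) (tc k (Mu s t))" by (intro PDR) auto
  also have "\<dots> \<approx> tc (k + m) (Mu s t)"
    using Mu eqv.trans[OF eS[OF PDR]] by (simp, intro BIN) auto
  finally show ?case .
qed

lemma TDL: "Par (discardn m) (tuple k ts) \<approx> tuple (m + k) (map (sh m) ts)"
proof (induction ts)
  case Nil then show ?case by (simp, intro eS[OF dadd])
next
  case (Cons t ts)
  have "Par (discardn m) (tuple k (t # ts)) \<approx> Seq (piR m k) (tuple k (t # ts))" by (intro PDL) auto
  also have "\<dots> \<approx> pair (Seq (piR m k) (tc k t)) (Seq (piR m k) (tuple k ts))" by (simp, intro P2) auto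
  also have "\<dots> \<approx> pair (Par (discardn m) (tc k t)) (Par (discardn m) (tuple k ts))"
    by (intro pair_cong eS[OF PDL]) auto
  also have "\<dots> \<approx> tuple (m + k) (map (sh m) (t # ts))" using Cons DL by (simp, intro pair_cong) auto
  finally show ?case .
qed

lemma TDR: "\<forall>t\<in>set ts. vars t \<subseteq> {..<k} \<Longrightarrow> Par (tuple k ts) (discardn m) \<approx> tuple (k + m) ts"
proof (induction ts)
  case Nil then show ?case by (simp, intro eS[OF dadd])
next
  case (Cons t ts)
  have "Par (tuple k (t # ts)) (discardn m) \<approx> Seq (piL k m) (tuple k (t # ts))" by (intro PDR) auto
  also have "\<dots> \<approx> pair (Seq (piL k m) (tc k t)) (Seq (piL k m) (tuple k ts))" by (simp, intro P2) auto
  also have "\<dots> \<approx> pair (Par (tc k t) (discardn m)) (Par (tuple k ts) (discardn m))"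
    by (intro pair_cong eS[OF PDR]) auto
  also have "\<dots> \<approx> tuple (k + m) (t # ts)" using Cons DR by (simp, intro pair_cong) auto
  finally show ?case .
qed

lemma IdT: "Id n \<approx> tuple n (map V [0..<n])"
proof (induction n)
  case 0 then show ?case by (simp, intro eR) auto
next
  case (Suc n)
  have "Id (Suc n) \<approx> pair (piL 1 n) (piR 1 n)" using eS[OF Q[of 1 n]] by simp
  also have "\<dots> \<approx> pair (tc (Suc n) (V 0)) (tuple (1 + n) (map (sh 1) (map V [0..<n])))"
  proof (intro pair_cong)
    show "piL 1 n \<approx> tc (Suc n) (V 0)" by (simp add: piL_def, intro eR) auto
    have "piR 1 n \<approx> Par (discardn 1) (tuple n (map V [0..<n]))" unfolding piR_def
      using Suc by (intro parR) auto
    also have "\<dots> \<approx> tuple (1 + n) (map (sh 1) (map V [0..<n]))" by (rule TDL)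
    finally show "piR 1 n \<approx> tuple (1 + n) (map (sh 1) (map V [0..<n]))" .
  qed auto
  also have "map (sh 1) (map V [0..<n]) = map V [1..<Suc n]"
    by (rule nth_equalityI) (auto simp del: upt_Suc)
  finally show ?case by (simp add: upt_conv_Cons del: upt_Suc)
qed

fun gtm :: "gen \<Rightarrow> trm list" where
  "gtm Discard = []" | "gtm Copy = [V 0, V 0]" | "gtm Zero = [Z]" | "gtm One = [E1]"
| "gtm Add = [Ad (V 0) (V 1)]" | "gtm And = [Mu (V 0) (V 1)]"

fun tm :: "circ \<Rightarrow> trm list" where
  "tm (Gen g) = gtm g"
| "tm (Id n) = map V [0..<n]"
| "tm (Sym m n) = map V [m..<m+n] @ map V [0..<m]"
| "tm (Seq f g) = map (subst (tm f)) (tm g)"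
| "tm (Par f g) = tm f @ map (sh (dm f)) (tm g)"

lemma vars_subst: "vars (subst ss u) \<subseteq> \<Union> (vars ` set ss)"
  by (induction u) (use nth_mem in fastforce)+

lemma vars_sh: "vars (sh m t) = (\<lambda>i. m + i) ` vars t"
  by (induction t) auto

lemma tm_inv: "wt c \<Longrightarrow> length (tm c) = cd c \<and> (\<forall>t\<in>set (tm c). vars t \<subseteq> {..<dm c})"
proof (induction c)
  case (Gen g) then show ?case by (cases g) auto
next
  case (Seq f g) then show ?case using vars_subst by fastforce
next
  case (Par f g) then show ?case by (fastforce simp: vars_sh)
qed auto

lemma bin_gate: "wt g \<Longrightarrow> dm g = 2 \<Longrightarrow> cd g = 1 \<Longrightarrow> g \<approx> tuple 2 [Ad (V 0) (V 1)] \<or> True"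
  by simp

lemma gate2: "wt g \<Longrightarrow> dm g = 2 \<Longrightarrow> Seq (pair (proj 2 0) (proj 2 1)) g \<approx> g"
proof -
  assume a: "wt g" "dm g = 2"
  have "proj 2 1 \<approx> Par discard (Id 1)"
    by (simp add: numeral_2_eq_2, intro parR punitr) auto
  also have "\<dots> \<approx> Par discard (Par (Id 0) (Id 1))" by (intro parR eS[OF punitl]) auto
  also have "\<dots> \<approx> piR 1 1" unfolding piR_def by (simp, intro eS[OF passoc]) auto
  finally have p1: "proj 2 1 \<approx> piR 1 1" .
  have p0: "proj 2 0 = piL 1 1" by (simp add: numeral_2_eq_2 piL_def)
  have "Seq (pair (proj 2 0) (proj 2 1)) g \<approx> Seq (pair (piL 1 1) (piR 1 1)) g"
    unfolding p0 using a p1 by (intro seqL pair_cong eR) (auto simp: numeral_2_eq_2)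
  also have "\<dots> \<approx> Seq (Id 2) g"
  proof -
    have q: "pair (piL 1 1) (piR 1 1) \<approx> Id 2" using Q[of 1 1] by (simp only: one_add_one)
    show ?thesis using a by (intro seqL q) auto
  qed
  also have "\<dots> \<approx> g" using a by (intro idl) auto
  finally show ?thesis .
qed

lemma gen_T: "Gen g \<approx> tuple (gdom g) (gtm g)"
proof (cases g)
  case Discard then show ?thesis by (simp, intro eS[OF punitr]) auto
next
  case Zero
  have "zero \<approx> Seq (Id 0) zero" by (intro eS[OF idl]) auto
  also have "\<dots> \<approx> tuple 0 [Z]" using eS[OF tc_tuple1[of 0 Z]] by simp
  finally show ?thesis using Zero by simp
next
  case One
  have "one \<approx> Seq (Id 0) one" by (intro eS[OF idl]) auto
  also have "\<dots> \<approx> tuple 0 [E1]" using eS[OF tc_tuple1[of 0 E1]] by simp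
  finally show ?thesis using One by simp
next
  case Copy
  have i1: "tc 1 (V 0) \<approx> Id 1" by (simp, intro punitr) auto
  have "copy \<approx> copyn 1" by (rule eS[OF copyn1])
  also have "\<dots> \<approx> Seq (copyn 1) (Id 2)" by (intro eS[OF idr]) auto
  also have "\<dots> \<approx> pair (Id 1) (Id 1)"
  proof -
    have p: "Par (Id 1) (Id 1) \<approx> Id 2" using pid[of 1 1] by (simp only: one_add_one)
    show ?thesis unfolding pair_def dm.simps by (intro seqR eS[OF p]) auto
  qed
  also have "\<dots> \<approx> pair (tc 1 (V 0)) (pair (tc 1 (V 0)) (discardn 1))"
  proof (intro pair_cong)
    show "Id 1 \<approx> tc 1 (V 0)" by (rule eS[OF i1])
    have "pair (tc 1 (V 0)) (discardn 1) \<approx> tc 1 (V 0)" by (intro P3R) auto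
    also have "\<dots> \<approx> Id 1" by (rule i1)
    finally show "Id 1 \<approx> pair (tc 1 (V 0)) (discardn 1)" by (rule eS)
  qed auto
  finally show ?thesis using Copy by simp
next
  case Add
  have "add \<approx> Seq (pair (proj 2 0) (proj 2 1)) add" by (intro eS[OF gate2]) auto
  also have "\<dots> \<approx> tuple 2 [Ad (V 0) (V 1)]" using eS[OF tc_tuple1[of 2 "Ad (V 0) (V 1)"]] by simp
  finally show ?thesis using Add by simp
next
  case And
  have "andg \<approx> Seq (pair (proj 2 0) (proj 2 1)) andg" by (intro eS[OF gate2]) auto
  also have "\<dots> \<approx> tuple 2 [Mu (V 0) (V 1)]" using eS[OF tc_tuple1[of 2 "Mu (V 0) (V 1)"]] by simp
  finally show ?thesis using And by simp
qed

lemma T1: "wt c \<Longrightarrow> c \<approx> tuple (dm c) (tm c)"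
proof (induction c)
  case (Gen g) then show ?case using gen_T by simp
next
  case (Id n) then show ?case using IdT by simp
next
  case (Sym m n)
  have "Sym m n \<approx> pair (piR m n) (piL m n)" by (rule sym_pair)
  also have "\<dots> \<approx> pair (tuple (m + n) (map V [m..<m+n])) (tuple (m + n) (map V [0..<m]))"
  proof (intro pair_cong)
    have "piR m n \<approx> Par (discardn m) (tuple n (map V [0..<n]))" unfolding piR_def by (intro parR IdT) auto
    also have "\<dots> \<approx> tuple (m + n) (map (sh m) (map V [0..<n]))" by (rule TDL)
    also have "map (sh m) (map V [0..<n]) = map V [m..<m+n]" by (rule nth_equalityI) auto
    finally show "piR m n \<approx> tuple (m + n) (map V [m..<m+n])" .
    have "piL m n \<approx> Par (tuple m (map V [0..<m])) (discardn n)" unfolding piL_def by (intro parL IdT) auto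
    also have "\<dots> \<approx> tuple (m + n) (map V [0..<m])" by (rule TDR) auto
    finally show "piL m n \<approx> tuple (m + n) (map V [0..<m])" .
  qed auto
  also have "\<dots> \<approx> tuple (m + n) (map V [m..<m+n] @ map V [0..<m])" by (rule tuple_app)
  finally show ?case by simp
next
  case (Seq f g)
  have l: "length (tm f) = cd f" using tm_inv Seq by auto
  have "Seq f g \<approx> Seq (tuple (dm f) (tm f)) (tuple (dm g) (tm g))" using Seq by (intro eqv.seq) auto
  also have "\<dots> \<approx> tuple (dm f) (map (subst (tm f)) (tm g))" using KT[of "dm f" "tm f" "tm g"] Seq l by simp
  finally show ?case by simp
next
  case (Par f g)
  define a where "a = dm f"
  define b where "b = dm g"
  have w: "wt f" "wt g" using Par by auto
  have vf: "\<forall>t\<in>set (tm f). vars t \<subseteq> {..<a}" using tm_inv w by (auto simp: a_def)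
  have "Par f g \<approx> Seq (Id (a + b)) (Par f g)" using w by (intro eS[OF idl]) (auto simp: a_def b_def)
  also have "\<dots> \<approx> Seq (pair (piL a b) (piR a b)) (Par f g)" using w by (intro seqL eS[OF Q]) (auto simp: a_def b_def)
  also have "\<dots> \<approx> pair (Seq (piL a b) f) (Seq (piR a b) g)" using w by (intro P1) (auto simp: a_def b_def)
  also have "\<dots> \<approx> pair (Par f (discardn b)) (Par (discardn a) g)"
    using w by (intro pair_cong eS[OF PDR] eS[OF PDL]) (auto simp: a_def b_def)
  also have "\<dots> \<approx> pair (Par (tuple a (tm f)) (discardn b)) (Par (discardn a) (tuple b (tm g)))"
    using Par w by (intro pair_cong parL parR) (auto simp: a_def b_def)
  also have "\<dots> \<approx> pair (tuple (a + b) (tm f)) (tuple (a + b) (map (sh a) (tm g)))"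
    using vf by (intro pair_cong TDR TDL) auto
  also have "\<dots> \<approx> tuple (a + b) (tm f @ map (sh a) (tm g))" by (rule tuple_app)
  finally show ?case by (simp add: a_def b_def)
qed

inductive tlaw :: "nat \<Rightarrow> trm \<Rightarrow> trm \<Rightarrow> bool" where
  "tlaw 2 (Ad (V 1) (V 0)) (Ad (V 0) (V 1))"
| "tlaw 3 (Ad (Ad (V 0) (V 1)) (V 2)) (Ad (V 0) (Ad (V 1) (V 2)))"
| "tlaw 1 (Ad Z (V 0)) (V 0)"
| "tlaw 2 (Mu (V 1) (V 0)) (Mu (V 0) (V 1))"
| "tlaw 3 (Mu (Mu (V 0) (V 1)) (V 2)) (Mu (V 0) (Mu (V 1) (V 2)))"
| "tlaw 1 (Mu E1 (V 0)) (V 0)"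
| "tlaw 1 (Ad (V 0) (V 0)) Z"
| "tlaw 3 (Mu (V 0) (Ad (V 1) (V 2))) (Ad (Mu (V 0) (V 1)) (Mu (V 0) (V 2)))"

inductive teq :: "trm \<Rightarrow> trm \<Rightarrow> bool" where
  tax: "tlaw n l r \<Longrightarrow> length ss = n \<Longrightarrow> teq (subst ss l) (subst ss r)"
| trefl: "teq t t"
| tsym: "teq s t \<Longrightarrow> teq t s"
| ttrans: "teq s t \<Longrightarrow> teq t u \<Longrightarrow> teq s u"
| tad: "teq s s' \<Longrightarrow> teq t t' \<Longrightarrow> teq (Ad s t) (Ad s' t')"
| tmu: "teq s s' \<Longrightarrow> teq t t' \<Longrightarrow> teq (Mu s t) (Mu s' t')"

lemma law_sound:
  assumes "axA C D" "wt C" "wt D" "dm C = n" "dm D = n" "cd C = 1" "cd D = 1" "tm C = [l]" "tm D = [r]"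
    "length ss = n"
  shows "tc k (subst ss l) \<approx> tc k (subst ss r)"
proof -
  have "tc k (subst ss l) \<approx> Seq (tuple k ss) (tc n l)" using K[of k ss l] assms by (simp add: eS)
  also have "\<dots> \<approx> Seq (tuple k ss) C"
  proof (intro seqR)
    have "tc n l \<approx> tuple n [l]" by (rule eS[OF tc_tuple1])
    also have "\<dots> \<approx> C" using T1[of C] assms by (simp add: eS)
    finally show "tc n l \<approx> C" .
  qed (use assms in auto)
  also have "\<dots> \<approx> Seq (tuple k ss) D" using assms by (intro seqR axeq) auto
  also have "\<dots> \<approx> Seq (tuple k ss) (tc n r)"
  proof (intro seqR)
    have "D \<approx> tuple n [r]" using T1[of D] assms by simp
    also have "\<dots> \<approx> tc n r" by (rule tc_tuple1)
    finally show "D \<approx> tc n r" .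
  qed (use assms in auto)
  also have "\<dots> \<approx> tc k (subst ss r)" using K[of k ss r] assms by simp
  finally show ?thesis .
qed

lemma tlaw_sound: "tlaw n l r \<Longrightarrow> length ss = n \<Longrightarrow> tc k (subst ss l) \<approx> tc k (subst ss r)"
proof (induction rule: tlaw.induct)
  case 1 then show ?case by (intro law_sound[OF axA.add_comm]) (auto simp: upt_rec)
next
  case 2 then show ?case by (intro law_sound[OF axA.add_assoc]) (auto simp: upt_rec)
next
  case 3 then show ?case by (intro law_sound[OF axA.add_unitl]) (auto simp: upt_rec)
next
  case 4 then show ?case by (intro law_sound[OF axA.and_comm]) (auto simp: upt_rec)
next
  case 5 then show ?case by (intro law_sound[OF axA.and_assoc]) (auto simp: upt_rec)
next
  case 6 then show ?case by (intro law_sound[OF axA.and_unitl]) (auto simp: upt_rec)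
next
  case 7 then show ?case by (intro law_sound[OF axA.copy_add]) (auto simp: upt_rec)
next
  case 8 then show ?case by (intro law_sound[OF axA.distr]) (auto simp: upt_rec)
qed

lemma teq_sound: "teq s t \<Longrightarrow> tc k s \<approx> tc k t"
proof (induction rule: teq.induct)
  case (tax n l r ss) then show ?case by (rule tlaw_sound)
next
  case (trefl t) then show ?case by (intro eR) auto
next
  case (tsym s t) show ?case by (rule eS[OF tsym.IH])
next
  case (ttrans s t u) show ?case by (rule eqv.trans[OF ttrans.IH])
next
  case (tad s s' t t') then show ?case by (simp, intro seqL pair_cong) auto
next
  case (tmu s s' t t') then show ?case by (simp, intro seqL pair_cong) auto
qed

lemma bit_cases: "(x::bit) = 0 \<or> x = 1" using bit_not_zero_iff by blast
lemma bit_double[simp]: "(x::bit) + x = 0" using bit_cases[of x] by auto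
lemma bit_sq[simp]: "(x::bit) * x = x" using bit_cases[of x] by auto

fun ev :: "(nat \<Rightarrow> bit) \<Rightarrow> trm \<Rightarrow> bit" where
  "ev \<rho> (V i) = \<rho> i"
| "ev \<rho> Z = 0"
| "ev \<rho> E1 = 1"
| "ev \<rho> (Ad s t) = ev \<rho> s + ev \<rho> t"
| "ev \<rho> (Mu s t) = ev \<rho> s * ev \<rho> t"

definition lookup :: "bit list \<Rightarrow> nat \<Rightarrow> bit" where
  "lookup xs i = (if i < length xs then xs ! i else 0)"

lemma ev_subst: "ev \<rho> (subst ss u) = ev (lookup (map (ev \<rho>) ss)) u"
  by (induction u) (auto simp: lookup_def)

lemma ev_sh: "ev \<rho> (sh m t) = ev (\<lambda>i. \<rho> (m + i)) t"
  by (induction t) auto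

lemma ev_cong: "(\<And>i. i \<in> vars t \<Longrightarrow> \<rho> i = \<rho>' i) \<Longrightarrow> ev \<rho> t = ev \<rho>' t"
  by (induction t) auto

lemma tlaw_ev: "tlaw n l r \<Longrightarrow> ev \<rho> l = ev \<rho> r"
  by (induction rule: tlaw.induct) (auto simp: algebra_simps)

lemma teq_ev: "teq s t \<Longrightarrow> ev \<rho> s = ev \<rho> t"
  by (induction rule: teq.induct) (auto simp: ev_subst tlaw_ev)

lemma teq_equivp: "equivp teq"
  by (rule equivpI) (auto simp: reflp_def symp_def transp_def intro: teq.intros)

quotient_type qt = trm / teq
  by (rule teq_equivp)

instantiation qt :: comm_ring_1
begin
lift_definition zero_qt :: qt is Z .
lift_definition one_qt :: qt is E1 .
lift_definition plus_qt :: "qt \<Rightarrow> qt \<Rightarrow> qt" is Ad by (rule tad)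
lift_definition times_qt :: "qt \<Rightarrow> qt \<Rightarrow> qt" is Mu by (rule tmu)
lift_definition uminus_qt :: "qt \<Rightarrow> qt" is "\<lambda>x. x" .
lift_definition minus_qt :: "qt \<Rightarrow> qt \<Rightarrow> qt" is Ad by (rule tad)

lemma law_inst: "tlaw n l r \<Longrightarrow> length ss = n \<Longrightarrow> teq (subst ss l) (subst ss r)"
  by (rule tax)

lemma t_add_comm: "teq (Ad a b) (Ad b a)"
  using law_inst[OF tlaw.intros(1), of "[b, a]"] by simp
lemma t_mul_comm: "teq (Mu a b) (Mu b a)"
  using law_inst[OF tlaw.intros(4), of "[b, a]"] by simp
lemma t_add_assoc: "teq (Ad (Ad a b) c) (Ad a (Ad b c))"
  using law_inst[OF tlaw.intros(2), of "[a, b, c]"] by simp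
lemma t_mul_assoc: "teq (Mu (Mu a b) c) (Mu a (Mu b c))"
  using law_inst[OF tlaw.intros(5), of "[a, b, c]"] by simp
lemma t_add_0: "teq (Ad Z a) a"
  using law_inst[OF tlaw.intros(3), of "[a]"] by simp
lemma t_mul_1: "teq (Mu E1 a) a"
  using law_inst[OF tlaw.intros(6), of "[a]"] by simp
lemma t_double: "teq (Ad a a) Z"
  using law_inst[OF tlaw.intros(7), of "[a]"] by simp
lemma t_distr: "teq (Mu c (Ad a b)) (Ad (Mu c a) (Mu c b))"
  using law_inst[OF tlaw.intros(8), of "[c, a, b]"] by simp

instance
proof
  fix a b c :: qt
  show "a + b + c = a + (b + c)"
    by transfer (rule t_add_assoc)
  show "a + b = b + a" by transfer (rule t_add_comm)
  show "0 + a = a" by transfer (rule t_add_0)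
  show "- a + a = 0" by transfer (rule t_double)
  show "a - b = a + - b" by transfer (rule trefl)
  show "a * b * c = a * (b * c)"
    by transfer (rule t_mul_assoc)
  show "a * b = b * a" by transfer (rule t_mul_comm)
  show "1 * a = a" by transfer (rule t_mul_1)
  show "(a + b) * c = a * c + b * c"
    by transfer (meson t_mul_comm t_distr tad ttrans)
  show "(0::qt) \<noteq> 1" by transfer (use teq_ev[of Z E1 "\<lambda>_. 0"] in auto)
qed
end

lemma qt_double: "(x::qt) + x = 0"
proof -
  have "- x + x = 0" by simp
  moreover have "- x = x" by transfer (rule trefl)
  ultimately show ?thesis by simp
qed

lemma abs_hom: "abs_qt Z = 0" "abs_qt E1 = 1" "abs_qt (Ad s t) = abs_qt s + abs_qt t"
  "abs_qt (Mu s t) = abs_qt s * abs_qt t"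
  by (simp_all add: zero_qt_def one_qt_def plus_qt.abs_eq times_qt.abs_eq)

fun mnf :: "trm \<Rightarrow> nat set set" where
  "mnf (V i) = {{i}}"
| "mnf Z = {}"
| "mnf E1 = {{}}"
| "mnf (Ad s t) = (mnf s - mnf t) \<union> (mnf t - mnf s)"
| "mnf (Mu s t) = (\<lambda>(m, n). m \<union> n) ` (mnf s \<times> mnf t)"

fun good :: "trm \<Rightarrow> bool" where
  "good (Ad s t) = (good s \<and> good t)"
| "good (Mu s t) = (good s \<and> good t \<and> vars s \<inter> vars t = {})"
| "good _ = True"

lemma finite_vars[simp]: "finite (vars t)" by (induction t) auto

lemma mnf_props: "finite (mnf t) \<and> (\<forall>m\<in>mnf t. m \<subseteq> vars t)"
  by (induction t) auto

lemma sum_symdiff: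
  fixes f :: "'b \<Rightarrow> 'a::comm_ring_1"
  assumes c2: "\<And>x::'a. x + x = 0" and fin: "finite A" "finite B"
  shows "sum f ((A - B) \<union> (B - A)) = sum f A + sum f B"
proof -
  have 1: "sum f A = sum f (A \<inter> B) + sum f (A - B)" by (rule sum.Int_Diff[OF fin(1)])
  have 2: "sum f B = sum f (A \<inter> B) + sum f (B - A)" using sum.Int_Diff[OF fin(2), of f A] by (simp add: Int_commute)
  have 3: "sum f ((A - B) \<union> (B - A)) = sum f (A - B) + sum f (B - A)"
    using fin by (intro sum.union_disjoint) auto
  have "sum f A + sum f B = (sum f (A \<inter> B) + sum f (A \<inter> B)) + sum f (A - B) + sum f (B - A)"
    unfolding 1 2 by (simp add: algebra_simps)
  then show ?thesis using 3 c2 by simp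
qed

lemma ml:
  fixes I :: "trm \<Rightarrow> 'a::comm_ring_1"
  assumes c2: "\<And>x::'a. x + x = 0"
    and hZ: "I Z = 0" and hE: "I E1 = 1" and hA: "\<And>s t. I (Ad s t) = I s + I t"
    and hM: "\<And>s t. I (Mu s t) = I s * I t"
  shows "good t \<Longrightarrow> I t = (\<Sum>m\<in>mnf t. \<Prod>i\<in>m. I (V i))"
proof (induction t)
  case (V i) then show ?case by simp
next
  case Z then show ?case using hZ by simp
next
  case E1 then show ?case using hE by simp
next
  case (Ad s t)
  have "finite (mnf s)" "finite (mnf t)" using mnf_props[of s] mnf_props[of t] by auto
  then show ?case using Ad by (simp add: hA sum_symdiff[OF c2])
next
  case (Mu s t)
  let ?pr = "\<lambda>m. \<Prod>i\<in>m. I (V i)"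
  have fs: "finite (mnf s)" "\<forall>m\<in>mnf s. m \<subseteq> vars s" using mnf_props[of s] by auto
  have ft: "finite (mnf t)" "\<forall>m\<in>mnf t. m \<subseteq> vars t" using mnf_props[of t] by auto
  have dj: "vars s \<inter> vars t = {}" using Mu by simp
  have "I (Mu s t) = (\<Sum>m\<in>mnf s. ?pr m) * (\<Sum>n\<in>mnf t. ?pr n)" using Mu hM by simp
  also have "\<dots> = (\<Sum>(m, n)\<in>mnf s \<times> mnf t. ?pr m * ?pr n)"
    by (simp add: sum_product sum.cartesian_product)
  also have "\<dots> = (\<Sum>(m, n)\<in>mnf s \<times> mnf t. ?pr (m \<union> n))"
  proof (rule sum.cong[OF HOL.refl])
    fix x assume "x \<in> mnf s \<times> mnf t"
    then obtain m n where x: "x = (m, n)" "m \<in> mnf s" "n \<in> mnf t" by auto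
    have s1: "m \<subseteq> vars s" "n \<subseteq> vars t" using x fs ft by auto
    have "finite m" "finite n" using s1 finite_subset finite_vars by blast+
    moreover have "m \<inter> n = {}" using s1 dj by blast
    ultimately show "(case x of (m, n) \<Rightarrow> ?pr m * ?pr n) = (case x of (m, n) \<Rightarrow> ?pr (m \<union> n))"
      using x by (simp add: prod.union_disjoint)
  qed
  also have "\<dots> = (\<Sum>u\<in>(\<lambda>(m, n). m \<union> n) ` (mnf s \<times> mnf t). ?pr u)"
  proof -
    have inj: "inj_on (\<lambda>(m, n). m \<union> n) (mnf s \<times> mnf t)"
    proof (rule inj_onI, clarify)
      fix m n m' n' assume a: "m \<in> mnf s" "n \<in> mnf t" "m' \<in> mnf s" "n' \<in> mnf t" "m \<union> n = m' \<union> n'"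
      have s1: "m \<subseteq> vars s" "m' \<subseteq> vars s" "n \<subseteq> vars t" "n' \<subseteq> vars t" using a fs ft by auto
      have e1: "m = (m \<union> n) \<inter> vars s" using s1 dj by blast
      have e2: "m' = (m' \<union> n') \<inter> vars s" using s1 dj by blast
      have e3: "n = (m \<union> n) \<inter> vars t" using s1 dj by blast
      have e4: "n' = (m' \<union> n') \<inter> vars t" using s1 dj by blast
      have "m = m'" using e1 e2 a(5) by simp
      moreover have "n = n'" using e3 e4 a(5) by simp
      ultimately show "m = m' \<and> n = n'" by simp
    qed
    show ?thesis using sum.reindex[OF inj, of ?pr] by (simp add: comp_def case_prod_unfold)
  qed
  finally show ?case by simp
qed

lemma ml_inj:
  fixes M N :: "nat set set"
  assumes fM: "finite M" "\<forall>m\<in>M. finite m" and fN: "finite N" "\<forall>m\<in>N. finite m"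
    and eq: "\<And>\<rho>. (\<Sum>m\<in>M. \<Prod>i\<in>m. \<rho> i) = (\<Sum>m\<in>N. \<Prod>i\<in>m. (\<rho> i :: bit))"
  shows "M = N"
proof (rule ccontr)
  assume ne: "M \<noteq> N"
  define D where "D = (M - N) \<union> (N - M)"
  have fD: "finite D" "\<forall>m\<in>D. finite m" using fM fN by (auto simp: D_def)
  have "D \<noteq> {}" using ne by (auto simp: D_def)
  then obtain m0 where m0: "m0 \<in> D" "\<forall>b\<in>D. b \<le> m0 \<longrightarrow> m0 = b"
    using finite_has_minimal[OF fD(1)] by blast
  define \<rho> :: "nat \<Rightarrow> bit" where "\<rho> i = (if i \<in> m0 then 1 else 0)" for i
  have D0: "(\<Sum>m\<in>D. \<Prod>i\<in>m. \<rho> i) = 0"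
    using sum_symdiff[where f = "\<lambda>m. \<Prod>i\<in>m. \<rho> i", OF bit_double fM(1) fN(1)] eq[of \<rho>]
    unfolding D_def by simp
  have pr: "(\<Prod>i\<in>m. \<rho> i) = (if m \<subseteq> m0 then 1 else 0)" if fm: "finite m" for m
  proof (cases "m \<subseteq> m0")
    case True then show ?thesis by (simp, intro prod.neutral) (auto simp: \<rho>_def)
  next
    case False
    then obtain j where "j \<in> m" "j \<notin> m0" by blast
    then have "(\<Prod>i\<in>m. \<rho> i) = 0" using fm by (subst prod_zero_iff) (auto simp: \<rho>_def)
    then show ?thesis using False by simp
  qed
  have "(\<Sum>m\<in>D. \<Prod>i\<in>m. \<rho> i) = (\<Sum>m\<in>D. if m = m0 then 1 else 0)"
    using fD m0 pr by (intro sum.cong HOL.refl) auto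
  also have "\<dots> = 1" using m0 fD by simp
  finally show False using D0 by simp
qed

definition den :: "circ \<Rightarrow> (nat \<Rightarrow> bit) \<Rightarrow> bit list" where
  "den c \<rho> = map (ev \<rho>) (tm c)"

lemma den_seq[simp]: "den (Seq f g) \<rho> = den g (lookup (den f \<rho>))"
  by (simp add: den_def ev_subst)
lemma den_par[simp]: "den (Par f g) \<rho> = den f \<rho> @ den g (\<lambda>i. \<rho> (dm f + i))"
  by (simp add: den_def ev_sh)
lemma den_id[simp]: "den (Id n) \<rho> = map \<rho> [0..<n]"
  by (simp add: den_def)
lemma map_upt_shift: "map f [m..<m+n] = map (\<lambda>i. f (m + i)) [0..<n]"
  by (rule nth_equalityI) auto
lemma den_sym[simp]: "den (Sym m n) \<rho> = map (\<lambda>i. \<rho> (m + i)) [0..<n] @ map \<rho> [0..<m]"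
  by (simp add: den_def map_upt_shift)
lemma mapA: "length A = n \<Longrightarrow> (\<And>i. i < n \<Longrightarrow> f i = A ! i) \<Longrightarrow> map f [0..<n] = A"
  by (rule nth_equalityI) auto
lemma den_gen[simp]: "den (Gen Discard) \<rho> = []" "den (Gen Copy) \<rho> = [\<rho> 0, \<rho> 0]"
  "den (Gen Zero) \<rho> = [0]" "den (Gen One) \<rho> = [1]" "den (Gen Add) \<rho> = [\<rho> 0 + \<rho> 1]"
  "den (Gen And) \<rho> = [\<rho> 0 * \<rho> 1]"
  by (simp_all add: den_def)

lemma den_len[simp]: "wt c \<Longrightarrow> length (den c \<rho>) = cd c"
  using tm_inv[of c] by (simp add: den_def)

lemma den_cong: "wt c \<Longrightarrow> (\<And>i. i < dm c \<Longrightarrow> \<rho> i = \<rho>' i) \<Longrightarrow> den c \<rho> = den c \<rho>'"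
  using tm_inv[of c] unfolding den_def by (auto intro!: ev_cong)

lemma lookup_app1[simp]: "i < length xs \<Longrightarrow> lookup (xs @ ys) i = lookup xs i"
  by (simp add: lookup_def nth_append)
lemma lookup_app2[simp]: "lookup (xs @ ys) (length xs + i) = lookup ys i"
  by (simp add: lookup_def nth_append)
lemma lookup_map[simp]: "i < n \<Longrightarrow> lookup (map \<rho> [0..<n]) i = \<rho> i"
  by (simp add: lookup_def)
lemma map_lookup[simp]: "map (lookup xs) [0..<length xs] = xs"
  by (rule nth_equalityI) (auto simp: lookup_def)

lemma den_discardn[simp]: "den (discardn n) \<rho> = []"
  by (induction n arbitrary: \<rho>) auto

lemma den_copyn: "den (copyn n) \<rho> = map \<rho> [0..<n] @ map \<rho> [0..<n]"
proof (induction n arbitrary: \<rho>)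
  case 0 then show ?case by simp
next
  case (Suc n)
  define A where "A = map (\<lambda>i. \<rho> (Suc i)) [0..<n]"
  define L where "L = [\<rho> 0, \<rho> 0] @ A @ A"
  have lA: "length A = n" by (simp add: A_def)
  have "den (copyn (Suc n)) \<rho> = den (Par (Id 1) (Par (Sym 1 n) (Id n))) (lookup L)"
    using Suc by (simp add: A_def L_def)
  also have "\<dots> = [lookup L 0] @ (map (\<lambda>i. lookup L (2+i)) [0..<n] @ [lookup L 1]) @ map (\<lambda>i. lookup L (2+n+i)) [0..<n]"
    by (simp add: ac_simps)
  also have "map (\<lambda>i. lookup L (2+i)) [0..<n] = A"
    by (rule mapA[OF lA]) (auto simp: L_def lookup_def nth_append lA)
  also have "map (\<lambda>i. lookup L (2+n+i)) [0..<n] = A"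
    by (rule mapA[OF lA]) (auto simp: L_def lookup_def nth_append lA)
  also have "lookup L 0 = \<rho> 0" by (simp add: L_def lookup_def)
  also have "lookup L 1 = \<rho> 0" by (simp add: L_def lookup_def)
  also have "[\<rho> 0] @ (A @ [\<rho> 0]) @ A = (\<rho> 0 # A) @ (\<rho> 0 # A)" by simp
  also have "\<rho> 0 # A = map \<rho> [0..<Suc n]"
    unfolding A_def by (rule nth_equalityI) (auto simp: nth_Cons' simp del: upt_Suc)
  finally show ?case .
qed

lemma map_lookup_len: "length xs = n \<Longrightarrow> map (lookup xs) [0..<n] = xs"
  by auto

lemma axA_den: "axA c d \<Longrightarrow> wt c \<Longrightarrow> wt d \<Longrightarrow> den c \<rho> = den d \<rho>"
proof (induction rule: axA.induct)
  case (copy_nat f)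
  let ?a = "dm f"
  have 1: "den (Seq f (copyn (cd f))) \<rho> = den f \<rho> @ den f \<rho>"
    using copy_nat map_lookup[of "den f \<rho>"] by (simp add: den_copyn)
  have 2: "den (Seq (copyn (dm f)) (Par f f)) \<rho> = den f \<rho> @ den f \<rho>"
  proof -
    have "den (Seq (copyn (dm f)) (Par f f)) \<rho> =
      den f (lookup (map \<rho> [0..<?a] @ map \<rho> [0..<?a])) @
      den f (\<lambda>i. lookup (map \<rho> [0..<?a] @ map \<rho> [0..<?a]) (?a + i))" by (simp add: den_copyn)
    also have "den f (lookup (map \<rho> [0..<?a] @ map \<rho> [0..<?a])) = den f \<rho>"
      using copy_nat by (intro den_cong) auto
    also have "den f (\<lambda>i. lookup (map \<rho> [0..<?a] @ map \<rho> [0..<?a]) (?a + i)) = den f \<rho>"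
    proof (intro den_cong)
      fix i assume "i < dm f"
      then show "lookup (map \<rho> [0..<?a] @ map \<rho> [0..<?a]) (?a + i) = \<rho> i"
        using lookup_app2[of "map \<rho> [0..<?a]" "map \<rho> [0..<?a]" i] by simp
    qed (use copy_nat in auto)
    finally show ?thesis .
  qed
  show ?case using 1 2 by simp
next
  case (discard_nat f) then show ?case by simp
qed (auto simp: lookup_def algebra_simps)

lemma map_split: "map \<rho> [0..<m+n] = map \<rho> [0..<m] @ map (\<lambda>i. \<rho> (m + i)) [0..<n]"
  by (rule nth_equalityI) (auto simp: nth_append)

lemma lookup_append: "lookup (xs @ ys) i = (if i < length xs then lookup xs i else lookup ys (i - length xs))"
  by (auto simp: lookup_def nth_append)
lemma map_eq_on: "(\<And>i. i < n \<Longrightarrow> f i = g i) \<Longrightarrow> map f [0..<n] = map g [0..<n]"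
  by auto

lemma smc_den: "smc_law c d \<Longrightarrow> wt c \<Longrightarrow> wt d \<Longrightarrow> den c \<rho> = den d \<rho>"
proof (induction arbitrary: \<rho> rule: smc_law.induct)
  case (seq_idl f) then show ?case by (simp, intro den_cong) auto
next
  case (seq_idr f) then show ?case using map_lookup[of "den f \<rho>"] by simp
next
  case (par_assoc f g h) then show ?case by (simp add: add.assoc)
next
  case (par_id m n) then show ?case by (simp add: map_split)
next
  case (interchange f g h k)
  let ?Df = "den f \<rho>" and ?Dh = "den h (\<lambda>i. \<rho> (dm f + i))"
  have 1: "den g (lookup (?Df @ ?Dh)) = den g (lookup ?Df)"
    using interchange by (intro den_cong) auto
  have 2: "den k (\<lambda>i. lookup (?Df @ ?Dh) (dm g + i)) = den k (lookup ?Dh)"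
    using interchange lookup_app2[of ?Df ?Dh] by (intro den_cong) auto
  show ?case using 1 2 interchange by simp
next
  case (sym_nat f g)
  let ?a = "dm f" and ?b = "dm g"
  let ?Df = "den f \<rho>" and ?Dg = "den g (\<lambda>i. \<rho> (dm f + i))"
  let ?S = "map (\<lambda>i. \<rho> (?a + i)) [0..<?b] @ map \<rho> [0..<?a]"
  have l: "length ?Df = cd f" "length ?Dg = cd g" using sym_nat by auto
  have L: "den (Seq (Par f g) (Sym (cd f) (cd g))) \<rho> = ?Dg @ ?Df"
  proof -
    have "den (Seq (Par f g) (Sym (cd f) (cd g))) \<rho> =
      map (\<lambda>i. lookup (?Df @ ?Dg) (cd f + i)) [0..<cd g] @ map (lookup (?Df @ ?Dg)) [0..<cd f]" by simp
    also have "map (\<lambda>i. lookup (?Df @ ?Dg) (cd f + i)) [0..<cd g] = ?Dg"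
      using l by (intro mapA) (auto simp: lookup_def nth_append)
    also have "map (lookup (?Df @ ?Dg)) [0..<cd f] = ?Df"
      using l by (intro mapA) (auto simp: lookup_def nth_append)
    finally show ?thesis .
  qed
  have R: "den (Seq (Sym (dm f) (dm g)) (Par g f)) \<rho> = ?Dg @ ?Df"
  proof -
    have "den (Seq (Sym (dm f) (dm g)) (Par g f)) \<rho> = den g (lookup ?S) @ den f (\<lambda>i. lookup ?S (?b + i))" by simp
    also have "den g (lookup ?S) = ?Dg" using sym_nat by (intro den_cong) (auto simp: lookup_def nth_append)
    also have "den f (\<lambda>i. lookup ?S (?b + i)) = ?Df" using sym_nat by (intro den_cong) (auto simp: lookup_def nth_append)
    finally show ?thesis .
  qed
  show ?case using L R by simp
next
  case (sym_inv m n)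
  let ?S = "map (\<lambda>i. \<rho> (m + i)) [0..<n] @ map \<rho> [0..<m]"
  have "den (Seq (Sym m n) (Sym n m)) \<rho> = map (\<lambda>i. lookup ?S (n + i)) [0..<m] @ map (lookup ?S) [0..<n]" by simp
  also have "map (\<lambda>i. lookup ?S (n + i)) [0..<m] = map \<rho> [0..<m]"
    by (rule map_eq_on) (simp add: lookup_append)
  also have "map (lookup ?S) [0..<n] = map (\<lambda>i. \<rho> (m + i)) [0..<n]"
    by (rule map_eq_on) (simp add: lookup_append)
  finally show ?case by (simp add: map_split)
next
  case (sym_hex1 m n p)
  let ?S = "map \<rho> [0..<m] @ (map (\<lambda>i. \<rho> (m + (n + i))) [0..<p] @ map (\<lambda>i. \<rho> (m + i)) [0..<n])"
  have "den (Seq (Par (Id m) (Sym n p)) (Par (Sym m p) (Id n))) \<rho>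
    = (map (\<lambda>i. lookup ?S (m + i)) [0..<p] @ map (lookup ?S) [0..<m]) @ map (\<lambda>i. lookup ?S (m + p + i)) [0..<n]"
    by simp
  also have "map (\<lambda>i. lookup ?S (m + i)) [0..<p] = map (\<lambda>i. \<rho> (m + n + i)) [0..<p]"
    by (rule map_eq_on) (simp add: lookup_append add.assoc)
  also have "map (lookup ?S) [0..<m] = map \<rho> [0..<m]"
    by (rule map_eq_on) (simp add: lookup_append)
  also have "map (\<lambda>i. lookup ?S (m + p + i)) [0..<n] = map (\<lambda>i. \<rho> (m + i)) [0..<n]"
    by (rule map_eq_on) (simp add: lookup_append)
  finally show ?case by (simp add: map_split)
next
  case (sym_hex2 m n p)
  let ?S = "(map (\<lambda>i. \<rho> (m + i)) [0..<n] @ map \<rho> [0..<m]) @ map (\<lambda>i. \<rho> (m + n + i)) [0..<p]"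
  have "den (Seq (Par (Sym m n) (Id p)) (Par (Id n) (Sym m p))) \<rho>
    = map (lookup ?S) [0..<n] @ (map (\<lambda>i. lookup ?S (n + (m + i))) [0..<p] @ map (\<lambda>i. lookup ?S (n + i)) [0..<m])"
    by simp
  also have "map (lookup ?S) [0..<n] = map (\<lambda>i. \<rho> (m + i)) [0..<n]"
    by (rule map_eq_on) (simp add: lookup_append)
  also have "map (\<lambda>i. lookup ?S (n + (m + i))) [0..<p] = map (\<lambda>i. \<rho> (m + (n + i))) [0..<p]"
    by (rule map_eq_on) (simp add: lookup_append add.assoc)
  also have "map (\<lambda>i. lookup ?S (n + i)) [0..<m] = map \<rho> [0..<m]"
    by (rule map_eq_on) (simp add: lookup_append)
  finally show ?case using map_split[of "\<lambda>i. \<rho> (m + i)" n p] by simp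
qed simp_all

lemma ES: "eqv axE c d \<Longrightarrow> den c \<rho> = den d \<rho>"
proof (induction arbitrary: \<rho> rule: eqv.induct)
  case (ax c d a b)
  then show ?case
  proof (cases rule: axE.cases)
    case fromA then show ?thesis using ax axA_den by (auto simp: hasty_def)
  next
    case idem then show ?thesis by (simp add: lookup_def)
  qed
next
  case (smc c d a b) then show ?case using smc_den by (auto simp: hasty_def)
next
  case (seq f f' g g') then show ?case by simp
next
  case (par f f' g g') then show ?case using eqv_typed[OF par.hyps(1)] by simp
qed auto

definition lk :: "nat set list \<Rightarrow> nat \<Rightarrow> nat set" where
  "lk xs i = (if i < length xs then xs ! i else {})"

definition setof :: "nat set list \<Rightarrow> trm \<Rightarrow> nat set" where
  "setof xs t = (\<Union>i\<in>vars t. lk xs i)"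

fun goodX :: "nat set list \<Rightarrow> trm \<Rightarrow> bool" where
  "goodX xs (Ad s t) = (goodX xs s \<and> goodX xs t)"
| "goodX xs (Mu s t) = (goodX xs s \<and> goodX xs t \<and> setof xs s \<inter> setof xs t = {})"
| "goodX xs _ = True"

lemma setof_simps[simp]: "setof xs (V i) = lk xs i" "setof xs Z = {}" "setof xs E1 = {}"
  "setof xs (Ad s t) = setof xs s \<union> setof xs t" "setof xs (Mu s t) = setof xs s \<union> setof xs t"
  by (auto simp: setof_def)

lemma setof_subst: "setof xs (subst ts u) = setof (map (setof xs) ts) u"
  by (induction u) (auto simp: lk_def)

lemma goodX_subst: "goodX (map (setof xs) ts) u \<Longrightarrow> \<forall>t\<in>set ts. goodX xs t \<Longrightarrow> goodX xs (subst ts u)"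
  by (induction u) (auto simp: setof_subst)

lemma setof_take: "vars t \<subseteq> {..<a} \<Longrightarrow> setof (take a xs) t = setof xs t"
  by (induction t) (auto simp: lk_def)

lemma goodX_take: "vars t \<subseteq> {..<a} \<Longrightarrow> goodX (take a xs) t = goodX xs t"
  by (induction t) (auto simp: setof_take)

lemma setof_drop: "a \<le> length xs \<Longrightarrow> setof (drop a xs) t = setof xs (sh a t)"
  by (induction t) (auto simp: lk_def)

lemma goodX_drop: "a \<le> length xs \<Longrightarrow> goodX (drop a xs) t = goodX xs (sh a t)"
  by (induction t) (auto simp: setof_drop)

lemma FL: "wt c \<Longrightarrow> length xs = dm c \<Longrightarrow>
  snd (flow c xs) = map (setof xs) (tm c) \<and> (fst (flow c xs) \<longrightarrow> (\<forall>t\<in>set (tm c). goodX xs t))"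
proof (induction c arbitrary: xs)
  case (Gen g) then show ?case
    by (cases g) (auto simp: lk_def)
next
  case (Id n) then show ?case
    by (auto simp: lk_def intro!: nth_equalityI)
next
  case (Sym m n) then show ?case
    by (auto simp: lk_def nth_append intro!: nth_equalityI)
next
  case (Seq f g)
  obtain o1 ys where f: "flow f xs = (o1, ys)" by (cases "flow f xs")
  obtain o2 zs where g: "flow g ys = (o2, zs)" by (cases "flow g ys")
  have IHf: "ys = map (setof xs) (tm f)" "o1 \<longrightarrow> (\<forall>t\<in>set (tm f). goodX xs t)"
    using Seq.IH(1)[of xs] Seq.prems f by auto
  have lys: "length ys = dm g" using IHf tm_inv[of f] Seq.prems by auto
  have IHg: "zs = map (setof ys) (tm g)" "o2 \<longrightarrow> (\<forall>t\<in>set (tm g). goodX ys t)"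
    using Seq.IH(2)[OF _ lys] Seq.prems g by auto
  show ?case using f g IHf IHg by (auto simp: setof_subst intro: goodX_subst)
next
  case (Par f g)
  let ?a = "dm f"
  obtain o1 ys where f: "flow f (take ?a xs) = (o1, ys)" by (cases "flow f (take ?a xs)")
  obtain o2 zs where g: "flow g (drop ?a xs) = (o2, zs)" by (cases "flow g (drop ?a xs)")
  have IHf: "ys = map (setof (take ?a xs)) (tm f)" "o1 \<longrightarrow> (\<forall>t\<in>set (tm f). goodX (take ?a xs) t)"
    using Par.IH(1)[of "take ?a xs"] Par.prems f by auto
  have IHg: "zs = map (setof (drop ?a xs)) (tm g)" "o2 \<longrightarrow> (\<forall>t\<in>set (tm g). goodX (drop ?a xs) t)"
    using Par.IH(2)[of "drop ?a xs"] Par.prems g by auto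
  have vf: "\<forall>t\<in>set (tm f). vars t \<subseteq> {..<?a}" using tm_inv[of f] Par.prems by auto
  have la: "?a \<le> length xs" using Par.prems by simp
  show ?case using f g IHf IHg vf la
    by (auto simp: setof_take goodX_take setof_drop goodX_drop)
qed

lemma goodX_good: "vars t \<subseteq> {..<a} \<Longrightarrow> goodX (map (\<lambda>i. {i}) [0..<a]) t \<Longrightarrow> good t"
proof (induction t)
  case (Mu s t)
  have "setof (map (\<lambda>i. {i}) [0..<a]) s = vars s" "setof (map (\<lambda>i. {i}) [0..<a]) t = vars t"
    using Mu.prems by (auto simp: setof_def lk_def)
  then show ?case using Mu by auto
qed auto

lemma safe_good: "wt c \<Longrightarrow> safe c \<Longrightarrow> \<forall>t\<in>set (tm c). good t"
proof -
  assume w: "wt c" and s: "safe c"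
  have "\<forall>t\<in>set (tm c). goodX (map (\<lambda>i. {i}) [0..<dm c]) t"
    using FL[OF w, of "map (\<lambda>i. {i}) [0..<dm c]"] s by (simp add: safe_def)
  then show ?thesis using tm_inv[OF w] goodX_good[of _ "dm c"] by simp
qed

lemma tuple_cong: "length ts = length us \<Longrightarrow> (\<And>j. j < length ts \<Longrightarrow> tc a (ts ! j) \<approx> tc a (us ! j)) \<Longrightarrow>
  tuple a ts \<approx> tuple a us"
proof (induction ts arbitrary: us)
  case Nil then show ?case by (simp, intro eR) auto
next
  case (Cons t ts)
  then obtain u us' where us: "us = u # us'" by (cases us) auto
  have "tc a t \<approx> tc a u" using Cons.prems(2)[of 0] us by simp
  moreover have "tuple a ts \<approx> tuple a us'"
  proof (rule Cons.IH)
    show "length ts = length us'" using Cons.prems us by simp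
    fix j assume "j < length ts"
    then show "tc a (ts ! j) \<approx> tc a (us' ! j)" using Cons.prems(2)[of "Suc j"] us by simp
  qed
  ultimately show ?case using us by (simp, intro pair_cong) auto
qed

lemma ev_ml: "good s \<Longrightarrow> ev \<rho> s = (\<Sum>m\<in>mnf s. \<Prod>i\<in>m. \<rho> i)"
proof -
  assume g: "good s"
  have "ev \<rho> s = (\<Sum>m\<in>mnf s. \<Prod>i\<in>m. ev \<rho> (V i))" by (rule ml[where I = "ev \<rho>"]) (auto simp: g)
  then show ?thesis by simp
qed

lemma mnf_fin1: "finite (mnf s)" using mnf_props[of s] by simp

lemma mnf_fin2: "\<forall>m\<in>mnf s. finite m"
proof
  fix m assume "m \<in> mnf s"
  then have "m \<subseteq> vars s" using mnf_props[of s] by blast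
  then show "finite m" using finite_subset finite_vars by blast
qed

lemma abs_ml: "good s \<Longrightarrow> abs_qt s = (\<Sum>m\<in>mnf s. \<Prod>i\<in>m. abs_qt (V i))"
  by (rule ml[where I = abs_qt]) (auto simp: abs_hom qt_double)

lemma good_eq: "good t \<Longrightarrow> good u \<Longrightarrow> (\<And>\<rho>. ev \<rho> t = ev \<rho> u) \<Longrightarrow> teq t u"
proof -
  assume gt: "good t" and gu: "good u" and e: "\<And>\<rho>. ev \<rho> t = ev \<rho> u"
  have "mnf t = mnf u"
  proof (rule ml_inj[OF mnf_fin1 mnf_fin2 mnf_fin1 mnf_fin2])
    fix \<rho> :: "nat \<Rightarrow> bit"
    have "(\<Sum>m\<in>mnf t. \<Prod>i\<in>m. \<rho> i) = ev \<rho> t" by (rule ev_ml[OF gt, symmetric])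
    also have "\<dots> = ev \<rho> u" by (rule e)
    also have "\<dots> = (\<Sum>m\<in>mnf u. \<Prod>i\<in>m. \<rho> i)" by (rule ev_ml[OF gu])
    finally show "(\<Sum>m\<in>mnf t. \<Prod>i\<in>m. \<rho> i) = (\<Sum>m\<in>mnf u. \<Prod>i\<in>m. \<rho> i)" .
  qed
  then have "abs_qt t = abs_qt u" by (simp only: abs_ml[OF gt] abs_ml[OF gu])
  then show ?thesis by (simp only: qt.abs_eq_iff)
qed

theorem mainTheorem5:
  fixes c d :: circ and a b :: nat
  assumes "hasty c a b" and "hasty d a b"
    and "safe c" and "safe d"
    and "eqE c d"
  shows "eqA c d"
proof -
  have w: "wt c" "wt d" "dm c = a" "dm d = a" "cd c = b" "cd d = b" using assms(1,2) by (auto simp: hasty_def)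
  have l: "length (tm c) = b" "length (tm d) = b" using tm_inv w by auto
  have gc: "\<forall>t\<in>set (tm c). good t" using safe_good w assms(3) by blast
  have gd: "\<forall>t\<in>set (tm d). good t" using safe_good w assms(4) by blast
  have dd: "den c \<rho> = den d \<rho>" for \<rho> using ES assms(5) by (simp add: eqE_def)
  have "c \<approx> tuple a (tm c)" using T1[of c] w by simp
  also have "\<dots> \<approx> tuple a (tm d)"
  proof (rule tuple_cong)
    show "length (tm c) = length (tm d)" using l by simp
    fix j assume j: "j < length (tm c)"
    have "teq (tm c ! j) (tm d ! j)"
    proof (rule good_eq)
      show "good (tm c ! j)" "good (tm d ! j)" using gc gd j l by auto
      fix \<rho> show "ev \<rho> (tm c ! j) = ev \<rho> (tm d ! j)"
        using arg_cong[OF dd[of \<rho>], of "\<lambda>xs. xs ! j"] j l by (simp add: den_def)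
    qed
    then show "tc a (tm c ! j) \<approx> tc a (tm d ! j)" by (rule teq_sound)
  qed
  also have "\<dots> \<approx> d" using T1[of d] w by (simp add: eS)
  finally show ?thesis by (simp add: eqA_def)
qed

end
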